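(* Let $X_n^A$ be the metric space of normal-form games with player set $P=\{1,\dots,n\}$ and fixed finite action-profile set $A$, with metric $d$. Let $\vec\sigma$ be a mixed strategy profile over $A$ and let $C\subseteq X_n^A$ be a compact set such that $\vec\sigma$ is a non-degenerate Nash equilibrium of every $\Gamma\in C$. Then for every $\epsilon>0$ there exists $\delta>0$ such that $\vec\sigma$ is $(\epsilon,\delta)$-strongly punishable in every game $\Gamma\in C$.
   Context: A normal-form game with players $P=\{1,\dots,n\}$ and action profiles $A=A_1\times\cdots\times A_n$, $A_i=\{a_i^1,\dots,a_i^{N_i}\}$, is determined by utilities $u_i:A\to\mathbb R$, extended to mixed profiles by expectation; $\sigma_i^j$ is the probability $\sigma_i$ assigns to $a_i^j$ and $\sigma_i(A_i)$ its support. $d(\Gamma,\Gamma')=\max_{i,\vec a}|u_i(\vec a)-u'_i(\vec a)|$. A Nash equilibrium $\vec\sigma$ of $\Gamma$ is $(\epsilon,\delta)$-strongly punishable if for every game $\Gamma'$ with $d(\Gamma,\Gamma')<\delta$ there is a Nash equilibrium $\vec\sigma'$ of $\Gamma'$ with $\sigma'_i(A_i)=\sigma_i(A_i)$ and $u_i'(\vec\sigma')-u_i(\vec\sigma)<\epsilon$ for all $i$. Non-degeneracy: with actions labelled so that $\sigma_i(A_i)=\{a_i^1,\dots,a_i^{M_i}\}$, for variables $\vec p=(p_i^k)_{i\in P,k\le M_i}$ let $u_i(a,\vec p_{-i}):=\sum u_i(a,(a_j^{k_j})_{j\ne i})\prod_{j\neq i}p_j^{k_j}$ (sum over $k_j\le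 M_j$). The characteristic function $f_{\vec\sigma}$ has components $\sum_{k\le M_i}p_i^k$ ($i\in P$) and $u_i(a_i^1,\vec p_{-i})-u_i(a_i^k,\vec p_{-i})$ ($i\in P$, $2\le k\le M_i$); the residual function $r_{\vec\sigma}$ has components $u_i(a_i^1,\vec p_{-i})-u_i(a_i^k,\vec p_{-i})$ ($i\in P$, $M_i<k\le N_i$). $\vec\sigma$ is non-degenerate if $|Df_{\vec\sigma}(\vec\sigma)|\ne0$ and all components of $r_{\vec\sigma}(\vec\sigma)$ are strictly positive. *)

theory Defs
  imports "HOL-Analysis.Analysis"
begin

text \<open>Players are 0,...,n-1 (standing for 1,...,n). A game is a utility function u :: player => profile => real,
  normalised to be 0 outside the meaningful domain, so that the space of games
  X_n^A is a genuine metric space under the sup-distance d.\<close>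

type_synonym game = "nat \<Rightarrow> (nat \<Rightarrow> nat) \<Rightarrow> real"
type_synonym mixed = "nat \<Rightarrow> nat \<Rightarrow> real"

definition profiles :: "nat \<Rightarrow> (nat \<Rightarrow> nat) \<Rightarrow> (nat \<Rightarrow> nat) set" where
  "profiles n N = PiE {..<n} (\<lambda>i. {..<N i})"

definition games :: "nat \<Rightarrow> (nat \<Rightarrow> nat) \<Rightarrow> game set" where
  "games n N = {u. \<forall>i a. (i < n \<and> a \<in> profiles n N) \<or> u i a = 0}"

definition gdist :: "nat \<Rightarrow> (nat \<Rightarrow> nat) \<Rightarrow> game \<Rightarrow> game \<Rightarrow> real" where
  "gdist n N u v = Max {\<bar>u i a - v i a\<bar> | i a. i < n \<and> a \<in> profiles n N}"

lemma games_Metric_space: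
  assumes "1 \<le> n" "\<forall>i<n. 1 \<le> N i"
  shows "Metric_space (games n N) (gdist n N)"
proof -
  let ?S = "\<lambda>u v. {\<bar>u i a - v i a\<bar> | i a. i < n \<and> a \<in> profiles n N}"
  have fin: "finite (?S u v)" for u v
  proof -
    have "?S u v = (\<lambda>(i,a). \<bar>u i a - v i a\<bar>) ` ({..<n} \<times> profiles n N)" by auto
    moreover have "finite (profiles n N)" unfolding profiles_def by (simp add: finite_PiE)
    ultimately show ?thesis by simp
  qed
  have "profiles n N \<noteq> {}" unfolding profiles_def using assms(2) by (simp add: PiE_eq_empty_iff lessThan_empty_iff) (simp add: Suc_le_eq)
  then obtain a0 where a0: "a0 \<in> profiles n N" by blast
  have ne: "?S u v \<noteq> {}" for u v using a0 assms(1) by (auto intro!: exI[of _ 0])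
  have ge: "\<bar>u i a - v i a\<bar> \<le> gdist n N u v" if "i<n" "a\<in>profiles n N" for u v i a
    unfolding gdist_def using fin that by (intro Max_ge) auto
  have ex: "\<exists>i a. i<n \<and> a\<in>profiles n N \<and> gdist n N u v = \<bar>u i a - v i a\<bar>" for u v
    using Max_in[OF fin ne, of u v] unfolding gdist_def by auto
  show ?thesis
  proof
    fix x y show "0 \<le> gdist n N x y" using ex[of x y] by auto
  next
    fix x y show "gdist n N x y = gdist n N y x" unfolding gdist_def
      by (rule arg_cong[where f=Max]) (auto simp: abs_minus_commute)
  next
    fix x y assume xy: "x \<in> games n N" "y \<in> games n N"
    show "gdist n N x y = 0 \<longleftrightarrow> x = y"
    proof
      assume 0: "gdist n N x y = 0"
      show "x = y"
      proof (intro ext)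
        fix i a show "x i a = y i a"
        proof (cases "i < n \<and> a \<in> profiles n N")
          case True with ge[of i a x y] 0 show ?thesis by auto
        next
          case False then have "x i a = 0" "y i a = 0" using xy unfolding games_def by blast+ then show ?thesis by simp
        qed
      qed
    next
      assume "x = y" then show "gdist n N x y = 0" using ex[of x y] by auto
    qed
  next
    fix x y z
    obtain i a where "i<n" "a\<in>profiles n N" "gdist n N x z = \<bar>x i a - z i a\<bar>" using ex by blast
    moreover have "\<bar>x i a - z i a\<bar> \<le> \<bar>x i a - y i a\<bar> + \<bar>y i a - z i a\<bar>" by linarith
    ultimately show "gdist n N x z \<le> gdist n N x y + gdist n N y z"
      using ge[of i a x y] ge[of i a y z] by linarith
  qed
qed

definition mixed_strategy :: "(nat \<Rightarrow> nat) \<Rightarrow> nat \<Rightarrow> (nat \<Rightarrow> real) \<Rightarrow> bool" where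
  "mixed_strategy N i s \<longleftrightarrow> (\<forall>j<N i. 0 \<le> s j) \<and> (\<Sum>j<N i. s j) = 1"

definition mixed_profile :: "nat \<Rightarrow> (nat \<Rightarrow> nat) \<Rightarrow> mixed \<Rightarrow> bool" where
  "mixed_profile n N \<sigma> \<longleftrightarrow> (\<forall>i<n. mixed_strategy N i (\<sigma> i))"

definition support :: "(nat \<Rightarrow> nat) \<Rightarrow> mixed \<Rightarrow> nat \<Rightarrow> nat set" where
  "support N \<sigma> i = {j. j < N i \<and> 0 < \<sigma> i j}"

definition eu :: "nat \<Rightarrow> (nat \<Rightarrow> nat) \<Rightarrow> game \<Rightarrow> mixed \<Rightarrow> nat \<Rightarrow> real" where
  "eu n N u \<sigma> i = (\<Sum>a\<in>profiles n N. u i a * (\<Prod>j<n. \<sigma> j (a j)))"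

definition nash :: "nat \<Rightarrow> (nat \<Rightarrow> nat) \<Rightarrow> game \<Rightarrow> mixed \<Rightarrow> bool" where
  "nash n N u \<sigma> \<longleftrightarrow> mixed_profile n N \<sigma> \<and>
     (\<forall>i<n. \<forall>s. mixed_strategy N i s \<longrightarrow> eu n N u (\<sigma>(i := s)) i \<le> eu n N u \<sigma> i)"

definition strongly_punishable ::
  "nat \<Rightarrow> (nat \<Rightarrow> nat) \<Rightarrow> game \<Rightarrow> mixed \<Rightarrow> real \<Rightarrow> real \<Rightarrow> bool" where
  "strongly_punishable n N u \<sigma> \<epsilon> \<delta> \<longleftrightarrow> nash n N u \<sigma> \<and>
     (\<forall>u' \<in> games n N. gdist n N u u' < \<delta> \<longrightarrow>
        (\<exists>\<sigma>'. nash n N u' \<sigma>' \<and> (\<forall>i<n. support N \<sigma>' i = support N \<sigma> i) \<and>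
              (\<forall>i<n. eu n N u' \<sigma>' i - eu n N u \<sigma> i < \<epsilon>)))"

text \<open>The reference action a_i^1 of player i is the least action in the support
  (any choice of labelling gives the same non-degeneracy condition).\<close>
definition ref_action :: "(nat \<Rightarrow> nat) \<Rightarrow> mixed \<Rightarrow> nat \<Rightarrow> nat" where
  "ref_action N \<sigma> i = Min (support N \<sigma> i)"

definition var_index :: "nat \<Rightarrow> (nat \<Rightarrow> nat) \<Rightarrow> mixed \<Rightarrow> (nat \<times> nat) set" where
  "var_index n N \<sigma> = {(i, k). i < n \<and> k \<in> support N \<sigma> i}"

definition util_against ::
  "nat \<Rightarrow> (nat \<Rightarrow> nat) \<Rightarrow> game \<Rightarrow> mixed \<Rightarrow> nat \<Rightarrow> nat \<Rightarrow> (nat \<times> nat \<Rightarrow> real) \<Rightarrow> real" where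
  "util_against n N u \<sigma> i a p =
     (\<Sum>b\<in>PiE ({..<n} - {i}) (support N \<sigma>). u i (b(i := a)) * (\<Prod>j\<in>{..<n} - {i}. p (j, b j)))"

definition char_fun ::
  "nat \<Rightarrow> (nat \<Rightarrow> nat) \<Rightarrow> game \<Rightarrow> mixed \<Rightarrow> (nat \<times> nat \<Rightarrow> real) \<Rightarrow> nat \<times> nat \<Rightarrow> real" where
  "char_fun n N u \<sigma> p c = (case c of (i, k) \<Rightarrow>
     if k = ref_action N \<sigma> i then (\<Sum>l\<in>support N \<sigma> i. p (i, l))
     else util_against n N u \<sigma> i (ref_action N \<sigma> i) p - util_against n N u \<sigma> i k p)"

definition jacobian ::
  "((nat \<times> nat \<Rightarrow> real) \<Rightarrow> nat \<times> nat \<Rightarrow> real) \<Rightarrow> (nat \<times> nat \<Rightarrow> real) \<Rightarrow> nat \<times> nat \<Rightarrow> nat \<times> nat \<Rightarrow> real" where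
  "jacobian f p c v = deriv (\<lambda>t. f (p(v := t)) c) (p v)"

definition det_on :: "'a set \<Rightarrow> ('a \<Rightarrow> 'a \<Rightarrow> real) \<Rightarrow> real" where
  "det_on I M = (\<Sum>\<pi> | \<pi> permutes I. of_int (sign \<pi>) * (\<Prod>x\<in>I. M x (\<pi> x)))"

definition non_degenerate :: "nat \<Rightarrow> (nat \<Rightarrow> nat) \<Rightarrow> game \<Rightarrow> mixed \<Rightarrow> bool" where
  "non_degenerate n N u \<sigma> \<longleftrightarrow>
     det_on (var_index n N \<sigma>)
        (jacobian (char_fun n N u \<sigma>) (\<lambda>(i, k). \<sigma> i k)) \<noteq> 0 \<and>
     (\<forall>i<n. \<forall>k<N i. k \<notin> support N \<sigma> i \<longrightarrow>
        0 < util_against n N u \<sigma> i (ref_action N \<sigma> i) (\<lambda>(j, l). \<sigma> j l)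
            - util_against n N u \<sigma> i k (\<lambda>(j, l). \<sigma> j l))"

end

theory Submission
  imports Defs "Jordan_Normal_Form.Determinant"
begin

lemma telescope:
  fixes \<Phi> :: "(nat \<times> nat \<Rightarrow> real) \<Rightarrow> real"
  assumes aff: "\<And>p v t. \<Phi> (p(v:=t)) = \<Phi> (p(v:=0)) + t * (\<Phi> (p(v:=1)) - \<Phi> (p(v:=0)))"
    and fin: "finite W"
  shows "(\<forall>x. x \<notin> W \<longrightarrow> p x = q x) \<Longrightarrow> \<exists>z. (\<forall>v x. z v x = p x \<or> z v x = q x) \<and>
     \<Phi> p - \<Phi> q = (\<Sum>v\<in>W. (p v - q v) * (\<Phi> ((z v)(v:=1)) - \<Phi> ((z v)(v:=0))))"
  using fin
proof (induction W arbitrary: p rule: finite_induct)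
  case empty
  then have "p = q" by auto
  then show ?case by auto
next
  case (insert v W)
  define p' where "p' = p(v := q v)"
  have "\<forall>x. x \<notin> W \<longrightarrow> p' x = q x" using insert.prems by (auto simp: p'_def)
  from insert.IH[OF this] obtain z' where z': "\<forall>w x. z' w x = p' x \<or> z' w x = q x"
    and eq: "\<Phi> p' - \<Phi> q = (\<Sum>w\<in>W. (p' w - q w) * (\<Phi> ((z' w)(w:=1)) - \<Phi> ((z' w)(w:=0))))" by blast
  define z where "z = z'(v := p)"
  have e1: "\<Phi> p = \<Phi> (p(v:=0)) + p v * (\<Phi> (p(v:=1)) - \<Phi> (p(v:=0)))"
    using aff[of p v "p v"] by simp
  have e2: "\<Phi> p' = \<Phi> (p(v:=0)) + q v * (\<Phi> (p(v:=1)) - \<Phi> (p(v:=0)))"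
    using aff[of p v "q v"] by (simp add: p'_def)
  have a1: "\<Phi> p - \<Phi> p' = (p v - q v) * (\<Phi> ((z v)(v:=1)) - \<Phi> ((z v)(v:=0)))"
    using e1 e2 by (simp add: z_def algebra_simps)
  have a2: "(\<Sum>w\<in>W. (p' w - q w) * (\<Phi> ((z' w)(w:=1)) - \<Phi> ((z' w)(w:=0))))
      = (\<Sum>w\<in>W. (p w - q w) * (\<Phi> ((z w)(w:=1)) - \<Phi> ((z w)(w:=0))))"
    using insert.hyps by (intro sum.cong) (auto simp: p'_def z_def)
  have "\<Phi> p - \<Phi> q = (\<Sum>w\<in>insert v W. (p w - q w) * (\<Phi> ((z w)(w:=1)) - \<Phi> ((z w)(w:=0))))"
    using eq insert.hyps a1 a2 by simp
  moreover have "\<forall>w x. z w x = p x \<or> z w x = q x"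
  proof (intro allI)
    fix w x show "z w x = p x \<or> z w x = q x"
      using z'[rule_format, of w x] by (cases "w = v"; cases "x = v") (auto simp: z_def p'_def)
  qed
  ultimately show ?case by blast
qed


lemma sum_B_bound:
  fixes B :: "'a \<Rightarrow> 'a \<Rightarrow> real"
  assumes "finite V"
  shows "(\<Sum>x\<in>V. \<bar>\<Sum>c\<in>V. B x c * y c\<bar>) \<le> (\<Sum>x\<in>V. \<Sum>c\<in>V. \<bar>B x c\<bar>) * (\<Sum>c\<in>V. \<bar>y c\<bar>)"
proof -
  have "(\<Sum>x\<in>V. \<bar>\<Sum>c\<in>V. B x c * y c\<bar>) \<le> (\<Sum>x\<in>V. \<Sum>c\<in>V. \<bar>B x c\<bar> * (\<Sum>c\<in>V. \<bar>y c\<bar>))"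
  proof (intro sum_mono)
    fix x assume "x \<in> V"
    have "\<bar>\<Sum>c\<in>V. B x c * y c\<bar> \<le> (\<Sum>c\<in>V. \<bar>B x c * y c\<bar>)" by (rule sum_abs)
    also have "\<dots> \<le> (\<Sum>c\<in>V. \<bar>B x c\<bar> * (\<Sum>c\<in>V. \<bar>y c\<bar>))"
    proof (intro sum_mono)
      fix c assume "c \<in> V"
      have "\<bar>y c\<bar> \<le> (\<Sum>c\<in>V. \<bar>y c\<bar>)" using assms \<open>c \<in> V\<close> by (intro member_le_sum) auto
      then show "\<bar>B x c * y c\<bar> \<le> \<bar>B x c\<bar> * (\<Sum>c\<in>V. \<bar>y c\<bar>)"
        by (simp add: abs_mult mult_left_mono)
    qed
    finally show "\<bar>\<Sum>c\<in>V. B x c * y c\<bar> \<le> (\<Sum>c\<in>V. \<bar>B x c\<bar> * (\<Sum>c\<in>V. \<bar>y c\<bar>))" .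
  qed
  also have "\<dots> = (\<Sum>x\<in>V. \<Sum>c\<in>V. \<bar>B x c\<bar>) * (\<Sum>c\<in>V. \<bar>y c\<bar>)"
    by (simp add: sum_distrib_right)
  finally show ?thesis .
qed

lemma newton:
  fixes G :: "(nat \<times> nat \<Rightarrow> real) \<Rightarrow> nat \<times> nat \<Rightarrow> real" and V :: "(nat \<times> nat) set"
  assumes finV: "finite V"
  and dep: "\<And>p q c. c \<in> V \<Longrightarrow> (\<forall>x\<in>V. p x = q x) \<Longrightarrow> G p c = G q c"
  and aff: "\<And>p v t c. G (p(v:=t)) c = G (p(v:=0)) c + t * (G (p(v:=1)) c - G (p(v:=0)) c)"
  and AB: "\<And>c d. c\<in>V \<Longrightarrow> d\<in>V \<Longrightarrow> (\<Sum>v\<in>V. A c v * B v d) = (if c = d then 1 else 0)"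
  and BA: "\<And>c d. c\<in>V \<Longrightarrow> d\<in>V \<Longrightarrow> (\<Sum>v\<in>V. B c v * A v d) = (if c = d then 1 else 0)"
  and \<rho>: "\<rho> > 0"
  and jac: "\<And>z c v. (\<forall>x\<in>V. \<bar>z x - p0 x\<bar> \<le> \<rho>) \<Longrightarrow> c\<in>V \<Longrightarrow> v\<in>V \<Longrightarrow>
              \<bar>G (z(v:=1)) c - G (z(v:=0)) c - A c v\<bar> \<le> \<kappa>"
  and \<kappa>: "(\<Sum>x\<in>V. \<Sum>y\<in>V. \<bar>B x y\<bar>) * real (card V) * \<kappa> \<le> 1/2"
  and start: "(\<Sum>x\<in>V. \<Sum>y\<in>V. \<bar>B x y\<bar>) * (\<Sum>c\<in>V. \<bar>G p0 c - tg c\<bar>) \<le> \<rho>/2"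
  shows "\<exists>p. (\<forall>x\<in>V. \<bar>p x - p0 x\<bar> \<le> \<rho>) \<and> (\<forall>c\<in>V. G p c = tg c)"
proof -
  define \<beta> where "\<beta> = (\<Sum>x\<in>V. \<Sum>y\<in>V. \<bar>B x y\<bar>)"
  have \<beta>0: "0 \<le> \<beta>" unfolding \<beta>_def by (intro sum_nonneg) auto
  define d where "d = (\<lambda>p q. \<Sum>x\<in>V. \<bar>(p::nat\<times>nat\<Rightarrow>real) x - q x\<bar>)"
  define q0 where "q0 = (\<lambda>x. if x \<in> V then p0 x else 0)"
  define M where "M = {p. (\<forall>x. x \<notin> V \<longrightarrow> p x = 0) \<and> d p q0 \<le> \<rho>}"
  define T where "T = (\<lambda>p x. if x \<in> V then p x - (\<Sum>c\<in>V. B x c * (G p c - tg c)) else 0)"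
  have dtri: "d p r \<le> d p q + d q r" for p q r
    unfolding d_def sum.distrib[symmetric] by (intro sum_mono) auto
  have dsym: "d p q = d q p" for p q unfolding d_def by (simp add: abs_minus_commute)
  have dcomp: "\<bar>p x - q x\<bar> \<le> d p q" if "x \<in> V" for p q x
    unfolding d_def using finV that by (intro member_le_sum) auto
  interpret MS: Metric_space M d
  proof
    show "0 \<le> d x y" for x y unfolding d_def by (intro sum_nonneg) auto
    show "d x y = d y x" for x y by (rule dsym)
    show "d x y \<le> d x z + d z y" for x y z by (rule dtri)
    fix x y assume "x \<in> M" "y \<in> M"
    show "d x y = 0 \<longleftrightarrow> x = y"
    proof
      assume "d x y = 0"
      then have "\<forall>v\<in>V. \<bar>x v - y v\<bar> = 0" unfolding d_def using finV
        by (subst sum_nonneg_eq_0_iff[symmetric]) auto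
      then show "x = y" using \<open>x \<in> M\<close> \<open>y \<in> M\<close> unfolding M_def by (auto intro!: ext)
    qed (simp add: d_def)
  qed
  have q0M: "q0 \<in> M" unfolding M_def d_def q0_def using \<rho> by auto
  have inM: "p \<in> M \<Longrightarrow> x \<in> V \<Longrightarrow> \<bar>p x - p0 x\<bar> \<le> \<rho>" for p x
    using dcomp[of x p q0] unfolding M_def q0_def by auto
  have contr: "d (T p) (T q) \<le> 1/2 * d p q" if pM: "p \<in> M" and qM: "q \<in> M" for p q
  proof -
    have agree: "\<forall>x. x \<notin> V \<longrightarrow> p x = q x" using pM qM unfolding M_def by auto
    have "\<forall>c\<in>V. \<exists>z. (\<forall>v x. z v x = p x \<or> z v x = q x) \<and>
       G p c - G q c = (\<Sum>v\<in>V. (p v - q v) * (G ((z v)(v:=1)) c - G ((z v)(v:=0)) c))"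
    proof
      fix c assume "c \<in> V"
      show "\<exists>z. (\<forall>v x. z v x = p x \<or> z v x = q x) \<and>
       G p c - G q c = (\<Sum>v\<in>V. (p v - q v) * (G ((z v)(v:=1)) c - G ((z v)(v:=0)) c))"
        by (rule telescope[of "\<lambda>p. G p c", OF aff finV agree])
    qed
    from bchoice[OF this] obtain zz where zzall: "\<forall>c\<in>V. (\<forall>v x. zz c v x = p x \<or> zz c v x = q x) \<and>
       G p c - G q c = (\<Sum>v\<in>V. (p v - q v) * (G ((zz c v)(v:=1)) c - G ((zz c v)(v:=0)) c))"
      by (elim exE)
    have zz: "\<And>c v x. c \<in> V \<Longrightarrow> zz c v x = p x \<or> zz c v x = q x"
      and zeq: "\<And>c. c \<in> V \<Longrightarrow> G p c - G q c =
         (\<Sum>v\<in>V. (p v - q v) * (G ((zz c v)(v:=1)) c - G ((zz c v)(v:=0)) c))"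
      using zzall by blast+
    define E where "E = (\<lambda>c. \<Sum>v\<in>V. (p v - q v) * (G ((zz c v)(v:=1)) c - G ((zz c v)(v:=0)) c - A c v))"
    have Ebound: "\<bar>E c\<bar> \<le> \<kappa> * d p q" if "c \<in> V" for c
    proof -
      have "\<bar>E c\<bar> \<le> (\<Sum>v\<in>V. \<bar>(p v - q v) * (G ((zz c v)(v:=1)) c - G ((zz c v)(v:=0)) c - A c v)\<bar>)"
        unfolding E_def by (rule sum_abs)
      also have "\<dots> \<le> (\<Sum>v\<in>V. \<bar>p v - q v\<bar> * \<kappa>)"
      proof (intro sum_mono)
        fix v assume v: "v \<in> V"
        have "\<forall>x\<in>V. \<bar>zz c v x - p0 x\<bar> \<le> \<rho>"
        proof
          fix x assume "x \<in> V"
          then show "\<bar>zz c v x - p0 x\<bar> \<le> \<rho>"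
            using zz[OF that, of v x] inM[OF pM, of x] inM[OF qM, of x] by auto
        qed
        from jac[OF this that v]
        show "\<bar>(p v - q v) * (G ((zz c v)(v:=1)) c - G ((zz c v)(v:=0)) c - A c v)\<bar> \<le> \<bar>p v - q v\<bar> * \<kappa>"
          by (simp add: abs_mult mult_left_mono)
      qed
      also have "\<dots> = \<kappa> * d p q" unfolding d_def sum_distrib_left by (simp add: mult.commute)
      finally show ?thesis .
    qed
    have Tdiff: "T p x - T q x = - (\<Sum>c\<in>V. B x c * E c)" if x: "x \<in> V" for x
    proof -
      have "p x - q x = (\<Sum>v\<in>V. (if x = v then p v - q v else 0))"
        using x finV by (simp add: sum.delta)
      also have "\<dots> = (\<Sum>v\<in>V. (\<Sum>c\<in>V. B x c * A c v) * (p v - q v))"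
        using BA x by (intro sum.cong) auto
      also have "\<dots> = (\<Sum>v\<in>V. \<Sum>c\<in>V. B x c * ((p v - q v) * A c v))"
        unfolding sum_distrib_right by (simp add: mult_ac)
      also have "\<dots> = (\<Sum>c\<in>V. \<Sum>v\<in>V. B x c * ((p v - q v) * A c v))"
        by (rule sum.swap)
      also have "\<dots> = (\<Sum>c\<in>V. B x c * (\<Sum>v\<in>V. (p v - q v) * A c v))"
        by (simp add: sum_distrib_left)
      finally have pq: "p x - q x = (\<Sum>c\<in>V. B x c * (\<Sum>v\<in>V. (p v - q v) * A c v))" .
      have "T p x - T q x = (p x - q x) - (\<Sum>c\<in>V. B x c * (G p c - G q c))"
      proof -
        have "(\<Sum>c\<in>V. B x c * (G p c - tg c)) - (\<Sum>c\<in>V. B x c * (G q c - tg c)) = (\<Sum>c\<in>V. B x c * (G p c - G q c))"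
          unfolding sum_subtractf[symmetric] by (intro sum.cong) (auto simp: algebra_simps)
        then show ?thesis using x unfolding T_def by simp
      qed
      also have "(\<Sum>c\<in>V. B x c * (G p c - G q c)) =
          (\<Sum>c\<in>V. B x c * (\<Sum>v\<in>V. (p v - q v) * A c v)) + (\<Sum>c\<in>V. B x c * E c)"
      proof -
        have Ec: "E c = (G p c - G q c) - (\<Sum>v\<in>V. (p v - q v) * A c v)" if "c \<in> V" for c
          unfolding E_def zeq[OF that] sum_subtractf[symmetric] by (intro sum.cong) (auto simp: right_diff_distrib)
        show ?thesis unfolding sum.distrib[symmetric]
        proof (intro sum.cong refl)
          fix c assume c: "c \<in> V"
          show "B x c * (G p c - G q c) = B x c * (\<Sum>v\<in>V. (p v - q v) * A c v) + B x c * E c"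
          proof -
            have gen: "\<And>b X Y::real. b*X = b*Y + b*(X - Y)" by (simp add: algebra_simps)
            show ?thesis by (subst Ec[OF c]) (rule gen)
          qed
        qed
      qed
      finally show ?thesis using pq by simp
    qed
    have "d (T p) (T q) = (\<Sum>x\<in>V. \<bar>\<Sum>c\<in>V. B x c * E c\<bar>)"
      unfolding d_def using Tdiff by (intro sum.cong) auto
    also have "\<dots> \<le> \<beta> * (\<Sum>c\<in>V. \<bar>E c\<bar>)" unfolding \<beta>_def by (rule sum_B_bound[OF finV])
    also have "\<dots> \<le> \<beta> * (\<Sum>c\<in>V. \<kappa> * d p q)"
      using Ebound \<beta>0 by (intro mult_left_mono sum_mono) auto
    also have "\<dots> = (\<beta> * real (card V) * \<kappa>) * d p q" by simp
    also have "\<dots> \<le> 1/2 * d p q"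
      using \<kappa> unfolding \<beta>_def[symmetric] by (intro mult_right_mono) (auto simp: d_def intro: sum_nonneg)
    finally show ?thesis .
  qed
  have Tout: "x \<notin> V \<Longrightarrow> T p x = 0" for p x unfolding T_def by simp
  have Tq0: "d (T q0) q0 \<le> \<rho>/2"
  proof -
    have "d (T q0) q0 = (\<Sum>x\<in>V. \<bar>\<Sum>c\<in>V. B x c * (G q0 c - tg c)\<bar>)"
      unfolding d_def T_def by (intro sum.cong) auto
    also have "\<dots> \<le> \<beta> * (\<Sum>c\<in>V. \<bar>G q0 c - tg c\<bar>)" unfolding \<beta>_def by (rule sum_B_bound[OF finV])
    also have "(\<Sum>c\<in>V. \<bar>G q0 c - tg c\<bar>) = (\<Sum>c\<in>V. \<bar>G p0 c - tg c\<bar>)"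
      by (intro sum.cong refl) (subst dep[of _ q0 p0], auto simp: q0_def)
    finally show ?thesis using start unfolding \<beta>_def by simp
  qed
  have TM: "T \<in> M \<rightarrow> M"
  proof
    fix p assume pM: "p \<in> M"
    have "d (T p) q0 \<le> d (T p) (T q0) + d (T q0) q0" by (rule dtri)
    also have "\<dots> \<le> 1/2 * d p q0 + \<rho>/2" using contr[OF pM q0M] Tq0 by simp
    also have "\<dots> \<le> \<rho>" using pM unfolding M_def by simp
    finally show "T p \<in> M" unfolding M_def using Tout by auto
  qed
  have compl: "MS.mcomplete"
    unfolding MS.mcomplete_def
  proof (intro allI impI)
    fix s assume cs: "MS.MCauchy s"
    then have sM: "\<And>k. s k \<in> M" and cau: "\<And>e. e > 0 \<Longrightarrow> \<exists>K. \<forall>k k'. K \<le> k \<longrightarrow> K \<le> k' \<longrightarrow> d (s k) (s k') < e"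
      unfolding MS.MCauchy_def by auto
    have "Cauchy (\<lambda>k. s k x)" if x: "x \<in> V" for x
    proof (rule metric_CauchyI)
      fix e :: real assume "e > 0"
      from cau[OF this] obtain K where K: "\<forall>k k'. K \<le> k \<longrightarrow> K \<le> k' \<longrightarrow> d (s k) (s k') < e" by blast
      show "\<exists>K. \<forall>k\<ge>K. \<forall>k'\<ge>K. dist (s k x) (s k' x) < e"
      proof (intro exI[of _ K] allI impI)
        fix k k' assume "K \<le> k" "K \<le> k'"
        then have "d (s k) (s k') < e" using K by blast
        moreover have "\<bar>s k x - s k' x\<bar> \<le> d (s k) (s k')" by (rule dcomp[OF x])
        ultimately show "dist (s k x) (s k' x) < e" by (simp add: dist_real_def)
      qed
    qed
    then have conv: "\<And>x. x \<in> V \<Longrightarrow> (\<lambda>k. s k x) \<longlonglongrightarrow> lim (\<lambda>k. s k x)"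
      using Cauchy_convergent_iff convergent_LIMSEQ_iff by blast
    define L where "L = (\<lambda>x. if x \<in> V then lim (\<lambda>k. s k x) else 0)"
    have conv': "(\<lambda>k. s k x) \<longlonglongrightarrow> L x" if "x \<in> V" for x using conv[OF that] that by (simp add: L_def)
    have dL: "(\<lambda>k. d (s k) L) \<longlonglongrightarrow> 0"
    proof -
      have "(\<lambda>k. \<Sum>x\<in>V. \<bar>s k x - L x\<bar>) \<longlonglongrightarrow> (\<Sum>x\<in>V. \<bar>L x - L x\<bar>)"
        by (intro tendsto_intros conv')
      then show ?thesis unfolding d_def by simp
    qed
    have dq: "(\<lambda>k. d (s k) q0) \<longlonglongrightarrow> d L q0"
      unfolding d_def by (intro tendsto_intros conv')
    have "d L q0 \<le> \<rho>"
      by (rule tendsto_upperbound[OF dq]) (use sM in \<open>auto simp: M_def\<close>)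
    then have LM: "L \<in> M" unfolding M_def L_def by auto
    show "\<exists>x. limitin MS.mtopology s x sequentially"
      using LM sM dL by (auto simp: MS.limitin_metric_dist_null intro!: exI[of _ L])
  qed
  obtain p where pM: "p \<in> M" and pfix: "T p = p"
    using MS.Banach_fixedpoint_thm[OF compl _ TM, of "1/2"] q0M contr by auto
  have zero: "(\<Sum>c\<in>V. B x c * (G p c - tg c)) = 0" if "x \<in> V" for x
  proof -
    have "T p x = p x" using pfix by simp
    then show ?thesis using that unfolding T_def by simp
  qed
  have "G p c = tg c" if c: "c \<in> V" for c
  proof -
    have "G p c - tg c = (\<Sum>y\<in>V. (if c = y then G p y - tg y else 0))"
      using c finV by (simp add: sum.delta)
    also have "\<dots> = (\<Sum>y\<in>V. (\<Sum>x\<in>V. A c x * B x y) * (G p y - tg y))"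
      using AB c by (intro sum.cong) auto
    also have "\<dots> = (\<Sum>y\<in>V. \<Sum>x\<in>V. A c x * (B x y * (G p y - tg y)))"
      unfolding sum_distrib_right by (simp add: mult_ac)
    also have "\<dots> = (\<Sum>x\<in>V. \<Sum>y\<in>V. A c x * (B x y * (G p y - tg y)))"
      by (rule sum.swap)
    also have "\<dots> = (\<Sum>x\<in>V. A c x * (\<Sum>y\<in>V. B x y * (G p y - tg y)))"
      by (simp add: sum_distrib_left)
    also have "\<dots> = 0" using zero by simp
    finally show ?thesis by simp
  qed
  then show ?thesis using inM[OF pM] by blast
qed


lemma aff_sum:
  fixes g :: "'a \<Rightarrow> real \<Rightarrow> real"
  assumes "\<And>x. x \<in> A \<Longrightarrow> g x t = g x 0 + t * (g x 1 - g x 0)"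
  shows "(\<Sum>x\<in>A. c x * g x t) = (\<Sum>x\<in>A. c x * g x 0) + t * ((\<Sum>x\<in>A. c x * g x 1) - (\<Sum>x\<in>A. c x * g x 0))"
proof -
  have "(\<Sum>x\<in>A. c x * g x t) = (\<Sum>x\<in>A. c x * g x 0 + t * (c x * g x 1 - c x * g x 0))"
  proof (intro sum.cong refl)
    fix x assume x: "x \<in> A"
    show "c x * g x t = c x * g x 0 + t * (c x * g x 1 - c x * g x 0)"
      by (subst assms[OF x]) (simp add: algebra_simps)
  qed
  also have "\<dots> = (\<Sum>x\<in>A. c x * g x 0) + (\<Sum>x\<in>A. t * (c x * g x 1 - c x * g x 0))"
    by (rule sum.distrib)
  also have "(\<Sum>x\<in>A. t * (c x * g x 1 - c x * g x 0)) = t * (\<Sum>x\<in>A. c x * g x 1 - c x * g x 0)"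
    by (rule sum_distrib_left[symmetric])
  also have "(\<Sum>x\<in>A. c x * g x 1 - c x * g x 0) = (\<Sum>x\<in>A. c x * g x 1) - (\<Sum>x\<in>A. c x * g x 0)"
    by (rule sum_subtractf)
  finally show ?thesis .
qed

lemma prod_aff:
  fixes p :: "nat \<times> nat \<Rightarrow> real" and b :: "nat \<Rightarrow> nat"
  assumes fin: "finite J"
  shows "(\<Prod>j\<in>J. (p(v:=t)) (j, b j)) = (\<Prod>j\<in>J. (p(v:=0)) (j, b j))
     + t * ((\<Prod>j\<in>J. (p(v:=1)) (j, b j)) - (\<Prod>j\<in>J. (p(v:=0)) (j, b j)))"
proof (cases "\<exists>j\<in>J. (j, b j) = v")
  case True
  then obtain j0 where j0: "j0 \<in> J" "(j0, b j0) = v" by blast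
  have rest: "(\<Prod>j\<in>J-{j0}. (p(v:=s)) (j, b j)) = (\<Prod>j\<in>J-{j0}. p (j, b j))" for s
    using j0 by (intro prod.cong) auto
  have "(\<Prod>j\<in>J. (p(v:=s)) (j, b j)) = s * (\<Prod>j\<in>J-{j0}. p (j, b j))" for s
    using prod.remove[OF fin j0(1), of "\<lambda>j. (p(v:=s)) (j, b j)"] rest[of s] j0 by simp
  then show ?thesis by simp
next
  case False
  then have "(\<Prod>j\<in>J. (p(v:=s)) (j, b j)) = (\<Prod>j\<in>J. p (j, b j))" for s
    by (intro prod.cong) auto
  then show ?thesis by simp
qed

lemma prod_diff:
  fixes x y :: "'a \<Rightarrow> real"
  assumes "finite J" "\<forall>j\<in>J. \<bar>y j\<bar> \<le> 1 \<and> \<bar>x j - y j\<bar> \<le> \<eta>" "0 \<le> \<eta>" "\<eta> \<le> 1"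
  shows "\<bar>prod x J - prod y J\<bar> \<le> real (card J) * 2 ^ card J * \<eta>"
  using assms
proof (induction J rule: finite_induct)
  case empty then show ?case by simp
next
  case (insert j J)
  let ?m = "card J"
  have IH: "\<bar>prod x J - prod y J\<bar> \<le> real ?m * 2 ^ ?m * \<eta>" using insert by auto
  have yj: "\<bar>y j\<bar> \<le> 1" and xyj: "\<bar>x j - y j\<bar> \<le> \<eta>" using insert.prems by auto
  have xj: "\<bar>x j\<bar> \<le> 2" using yj xyj insert.prems by linarith
  have Py: "\<bar>prod y J\<bar> \<le> 1"
    unfolding abs_prod using insert.prems by (intro prod_le_1) auto
  have "prod x (insert j J) - prod y (insert j J) = x j * (prod x J - prod y J) + (x j - y j) * prod y J"
    using insert.hyps by (simp add: algebra_simps)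
  then have "\<bar>prod x (insert j J) - prod y (insert j J)\<bar> \<le> \<bar>x j\<bar> * \<bar>prod x J - prod y J\<bar> + \<bar>x j - y j\<bar> * \<bar>prod y J\<bar>"
    by (metis abs_mult abs_triangle_ineq)
  also have "\<dots> \<le> 2 * (real ?m * 2 ^ ?m * \<eta>) + \<eta> * 1"
    by (intro add_mono mult_mono xj IH xyj Py) (auto simp: insert.prems)
  also have "\<dots> \<le> real (Suc ?m) * 2 ^ Suc ?m * \<eta>"
  proof -
    have "1 \<le> (2::real) ^ ?m" by simp
    then have h2: "(1::real) \<le> 2 * 2 ^ ?m" by linarith
    have "1 * \<eta> \<le> (2 * 2 ^ ?m) * \<eta>" by (rule mult_right_mono[OF h2]) (use insert.prems in simp)
    then have "\<eta> \<le> 2 * 2 ^ ?m * \<eta>" by simp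
    then show ?thesis by (simp add: algebra_simps)
  qed
  finally show ?case using insert.hyps by simp
qed

lemma prod_abs_le2:
  fixes x :: "'a \<Rightarrow> real"
  assumes "\<forall>j\<in>J. \<bar>x j\<bar> \<le> 2"
  shows "\<bar>prod x J\<bar> \<le> 2 ^ card J"
proof (cases "finite J")
  case True
  have "\<bar>prod x J\<bar> = (\<Prod>j\<in>J. \<bar>x j\<bar>)" by (rule abs_prod)
  also have "\<dots> \<le> (\<Prod>j\<in>J. 2)" using assms by (intro prod_mono) auto
  finally show ?thesis by simp
qed simp

locale GS =
  fixes n :: nat and N :: "nat \<Rightarrow> nat" and \<sigma> :: mixed
  assumes n1: "1 \<le> n" and N1: "\<forall>i<n. 1 \<le> N i" and mp: "mixed_profile n N \<sigma>"
begin

abbreviation "S \<equiv> support N \<sigma>"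
abbreviation "V \<equiv> var_index n N \<sigma>"
abbreviation "rf \<equiv> ref_action N \<sigma>"
abbreviation "p0 \<equiv> (\<lambda>(i,k). \<sigma> i k)"
abbreviation "U w i a p \<equiv> util_against n N w \<sigma> i a p"
abbreviation "F w p c \<equiv> char_fun n N w \<sigma> p c"
abbreviation "PI i \<equiv> PiE ({..<n} - {i}) S"

lemma S_sub: "S i \<subseteq> {..<N i}" by (auto simp: support_def)
lemma S_fin: "finite (S i)" using S_sub finite_subset by blast
lemma \<sigma>_nn: "i < n \<Longrightarrow> k < N i \<Longrightarrow> 0 \<le> \<sigma> i k"
  using mp by (auto simp: mixed_profile_def mixed_strategy_def)
lemma \<sigma>_sum: "i < n \<Longrightarrow> (\<Sum>k<N i. \<sigma> i k) = 1"
  using mp by (auto simp: mixed_profile_def mixed_strategy_def)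
lemma \<sigma>_off: "i < n \<Longrightarrow> k < N i \<Longrightarrow> k \<notin> S i \<Longrightarrow> \<sigma> i k = 0"
  using \<sigma>_nn[of i k] by (auto simp: support_def)
lemma \<sigma>_sumS: "i < n \<Longrightarrow> (\<Sum>k\<in>S i. \<sigma> i k) = 1"
proof -
  assume i: "i < n"
  have "(\<Sum>k\<in>S i. \<sigma> i k) = (\<Sum>k<N i. \<sigma> i k)"
    using S_sub \<sigma>_off[OF i] by (intro sum.mono_neutral_left) auto
  then show ?thesis using \<sigma>_sum[OF i] by simp
qed
lemma S_ne: "i < n \<Longrightarrow> S i \<noteq> {}"
proof
  assume i: "i < n" and "S i = {}"
  with \<sigma>_sumS[OF i] show False by simp
qed
lemma rf_in: "i < n \<Longrightarrow> rf i \<in> S i"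
  unfolding ref_action_def using S_ne S_fin by (intro Min_in) auto
lemma \<sigma>_le1: "i < n \<Longrightarrow> k < N i \<Longrightarrow> \<sigma> i k \<le> 1"
proof -
  assume i: "i < n" and k: "k < N i"
  have "\<sigma> i k \<le> (\<Sum>k<N i. \<sigma> i k)" using k \<sigma>_nn[OF i] by (intro member_le_sum) auto
  then show ?thesis using \<sigma>_sum[OF i] by simp
qed
lemma V_eq: "V = Sigma {..<n} S" by (auto simp: var_index_def)
lemma V_fin: "finite V" unfolding V_eq using S_fin by auto
lemma V_pos: "x \<in> V \<Longrightarrow> 0 < p0 x" by (auto simp: var_index_def support_def)
lemma V_le1: "x \<in> V \<Longrightarrow> \<bar>p0 x\<bar> \<le> 1"
proof -
  assume "x \<in> V"
  then obtain i k where x: "x = (i,k)" "i < n" "k < N i" by (auto simp: var_index_def support_def)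
  show ?thesis using \<sigma>_le1[OF x(2,3)] \<sigma>_nn[OF x(2,3)] x(1) by simp
qed
lemma PI_V: "b \<in> PI i \<Longrightarrow> j \<in> {..<n} - {i} \<Longrightarrow> (j, b j) \<in> V"
  by (auto simp: var_index_def PiE_iff)
lemma PI_prof: "i < n \<Longrightarrow> a < N i \<Longrightarrow> b \<in> PI i \<Longrightarrow> b(i:=a) \<in> profiles n N"
proof -
  assume i: "i < n" and a: "a < N i" and b: "b \<in> PI i"
  have "b(i:=a) \<in> PiE {..<n} (\<lambda>j. {..<N j})"
  proof (rule PiE_I)
    fix j assume "j \<in> {..<n}"
    then show "(b(i:=a)) j \<in> {..<N j}" using a b S_sub[of j] by (cases "j = i") (auto simp: PiE_iff)
  next
    fix j assume "j \<notin> {..<n}"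
    then show "(b(i:=a)) j = undefined" using b i by (auto simp: PiE_iff extensional_def)
  qed
  then show ?thesis unfolding profiles_def .
qed
lemma profiles_fin: "finite (profiles n N)" unfolding profiles_def by (simp add: finite_PiE)
lemma PI_fin: "finite (PI i)" using S_fin by (simp add: finite_PiE)

lemma U_cong: "i < n \<Longrightarrow> \<forall>x\<in>V. p x = q x \<Longrightarrow> U w i a p = U w i a q"
  unfolding util_against_def
  by (intro sum.cong refl arg_cong2[where f="(*)"] prod.cong) (auto dest: PI_V)

lemma F_cong: "c \<in> V \<Longrightarrow> \<forall>x\<in>V. p x = q x \<Longrightarrow> F w p c = F w q c"
proof -
  assume c: "c \<in> V" and pq: "\<forall>x\<in>V. p x = q x"
  obtain i k where ik: "c = (i,k)" "i < n" "k \<in> S i" using c by (auto simp: var_index_def)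
  have "(\<Sum>l\<in>S i. p (i, l)) = (\<Sum>l\<in>S i. q (i, l))"
    using pq ik by (intro sum.cong) (auto simp: var_index_def)
  then show ?thesis using U_cong[OF ik(2) pq] ik by (simp add: char_fun_def)
qed

lemma U_aff: "U w i a (p(v:=t)) = U w i a (p(v:=0)) + t * (U w i a (p(v:=1)) - U w i a (p(v:=0)))"
  unfolding util_against_def
  by (rule aff_sum[where g="\<lambda>b t. \<Prod>j\<in>{..<n} - {i}. (p(v:=t)) (j, b j)"]) (rule prod_aff, simp)

lemma F_aff: "F w (p(v:=t)) c = F w (p(v:=0)) c + t * (F w (p(v:=1)) c - F w (p(v:=0)) c)"
proof -
  obtain i k where c: "c = (i,k)" by (cases c)
  show ?thesis
  proof (cases "k = rf i")
    case True
    have "(\<Sum>l\<in>S i. 1 * (p(v:=t)) (i, l)) = (\<Sum>l\<in>S i. 1 * (p(v:=0)) (i, l))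
        + t * ((\<Sum>l\<in>S i. 1 * (p(v:=1)) (i, l)) - (\<Sum>l\<in>S i. 1 * (p(v:=0)) (i, l)))"
      by (rule aff_sum[where g="\<lambda>l t. (p(v:=t)) (i, l)"]) auto
    then show ?thesis using True c by (simp add: char_fun_def)
  next
    case False
    then show ?thesis using c U_aff[of w i "rf i" p v t] U_aff[of w i k p v t]
      by (simp add: char_fun_def algebra_simps)
  qed
qed

lemma jac: "jacobian (char_fun n N w \<sigma>) p c v = F w (p(v:=1)) c - F w (p(v:=0)) c"
proof -
  have e: "(\<lambda>t. F w (p(v:=t)) c) = (\<lambda>t. F w (p(v:=0)) c + t * (F w (p(v:=1)) c - F w (p(v:=0)) c))"
    by (rule ext, rule F_aff)
  have "((\<lambda>t. F w (p(v:=0)) c + t * (F w (p(v:=1)) c - F w (p(v:=0)) c)) has_real_derivative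
      (F w (p(v:=1)) c - F w (p(v:=0)) c)) (at (p v))"
    by (auto intro!: derivative_eq_intros)
  then show ?thesis unfolding jacobian_def e by (rule DERIV_imp_deriv)
qed

end

lemma ev_lin:
  fixes K \<kappa> :: real
  assumes "\<kappa> > 0"
  shows "eventually (\<lambda>\<eta>. 0 < \<eta> \<and> \<eta> \<le> 1 \<and> K * \<eta> < \<kappa>) (at_right 0)"
proof -
  have "((\<lambda>\<eta>. K * \<eta>) \<longlongrightarrow> K * 0) (at_right (0::real))"
    by (intro tendsto_intros)
  then have e1: "eventually (\<lambda>\<eta>. K * \<eta> < \<kappa>) (at_right 0)"
    using order_tendstoD(2)[of _ 0 _ \<kappa>] assms by simp
  have e2: "eventually (\<lambda>\<eta>. \<eta> \<in> {0<..<1}) (at_right (0::real))"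
    by (rule eventually_at_right_real) simp
  show ?thesis using e1 e2 by eventually_elim auto
qed

lemma abs_split: "\<bar>a*x - b*y\<bar> \<le> \<bar>a - b\<bar>*\<bar>x\<bar> + \<bar>b\<bar>*\<bar>x - y\<bar>" for a b x y :: real
proof -
  have "a*x - b*y = (a-b)*x + b*(x-y)" by (simp add: algebra_simps)
  then have "\<bar>a*x - b*y\<bar> \<le> \<bar>(a-b)*x\<bar> + \<bar>b*(x-y)\<bar>" by (simp add: abs_triangle_ineq)
  then show ?thesis by (simp add: abs_mult)
qed

context GS begin

lemma U_lip:
  assumes i: "i < n" and a: "a < N i" and \<eta>: "0 \<le> \<eta>" "\<eta> \<le> 1" and R: "0 \<le> R"
    and wu: "\<forall>b\<in>profiles n N. \<bar>w i b - u i b\<bar> \<le> \<eta>"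
    and uR: "\<forall>b\<in>profiles n N. \<bar>u i b\<bar> \<le> R"
    and pq: "\<forall>x\<in>V. \<bar>q x\<bar> \<le> 1 \<and> \<bar>p x - q x\<bar> \<le> \<eta>"
  shows "\<bar>U w i a p - U u i a q\<bar> \<le> real (card (PI i)) * ((2^n + R * n * 2^n) * \<eta>)"
proof -
  let ?J = "{..<n} - {i}"
  have "card ?J \<le> card {..<n}" by (rule card_mono) auto
  then have mJ: "card ?J \<le> n" by simp
  have pw: "(2::real) ^ card ?J \<le> 2 ^ n" using mJ by (intro power_increasing) auto
  have trm: "\<bar>w i (b(i:=a)) * (\<Prod>j\<in>?J. p (j, b j)) - u i (b(i:=a)) * (\<Prod>j\<in>?J. q (j, b j))\<bar>
      \<le> (2^n + R * n * 2^n) * \<eta>" if b: "b \<in> PI i" for b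
  proof -
    let ?X = "\<Prod>j\<in>?J. p (j, b j)" and ?Y = "\<Prod>j\<in>?J. q (j, b j)"
    have bV: "\<And>j. j \<in> ?J \<Longrightarrow> (j, b j) \<in> V" using PI_V[OF b] by blast
    have X: "\<bar>?X\<bar> \<le> 2 ^ n"
    proof -
      have "\<forall>j\<in>?J. \<bar>p (j, b j)\<bar> \<le> 2"
      proof
        fix j assume "j \<in> ?J"
        then have "\<bar>q (j, b j)\<bar> \<le> 1" "\<bar>p (j, b j) - q (j, b j)\<bar> \<le> \<eta>" using pq bV by auto
        then show "\<bar>p (j, b j)\<bar> \<le> 2" using \<eta> by linarith
      qed
      from prod_abs_le2[OF this] pw show ?thesis by linarith
    qed
    have XY: "\<bar>?X - ?Y\<bar> \<le> real n * 2 ^ n * \<eta>"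
    proof -
      have "\<bar>?X - ?Y\<bar> \<le> real (card ?J) * 2 ^ card ?J * \<eta>"
        using pq bV \<eta> by (intro prod_diff) auto
      also have "\<dots> \<le> real n * 2 ^ n * \<eta>"
        using mJ pw \<eta> by (intro mult_right_mono mult_mono) auto
      finally show ?thesis .
    qed
    have bp: "b(i:=a) \<in> profiles n N" by (rule PI_prof[OF i a b])
    have "\<bar>w i (b(i:=a)) * ?X - u i (b(i:=a)) * ?Y\<bar> \<le> \<bar>w i (b(i:=a)) - u i (b(i:=a))\<bar> * \<bar>?X\<bar> + \<bar>u i (b(i:=a))\<bar> * \<bar>?X - ?Y\<bar>"
      by (rule abs_split)
    also have "\<dots> \<le> \<eta> * 2 ^ n + R * (real n * 2 ^ n * \<eta>)"
      using wu uR bp X XY \<eta> R by (intro add_mono mult_mono) auto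
    also have "\<dots> = (2^n + R * n * 2^n) * \<eta>" by (simp add: algebra_simps)
    finally show ?thesis .
  qed
  have "U w i a p - U u i a q = (\<Sum>b\<in>PI i. w i (b(i:=a)) * (\<Prod>j\<in>?J. p (j, b j)) - u i (b(i:=a)) * (\<Prod>j\<in>?J. q (j, b j)))"
    unfolding util_against_def by (rule sum_subtractf[symmetric])
  then have "\<bar>U w i a p - U u i a q\<bar> \<le> (\<Sum>b\<in>PI i. \<bar>w i (b(i:=a)) * (\<Prod>j\<in>?J. p (j, b j)) - u i (b(i:=a)) * (\<Prod>j\<in>?J. q (j, b j))\<bar>)"
    by (simp add: sum_abs)
  also have "\<dots> \<le> real (card (PI i)) * ((2^n + R * n * 2^n) * \<eta>)"
    using trm by (intro sum_bounded_above) auto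
  finally show ?thesis .
qed

definition near :: "game \<Rightarrow> real \<Rightarrow> game \<Rightarrow> (nat \<times> nat \<Rightarrow> real) \<Rightarrow> (nat \<times> nat \<Rightarrow> real) \<Rightarrow> bool" where
  "near u \<eta> w p q \<longleftrightarrow> (\<forall>i<n. \<forall>b\<in>profiles n N. \<bar>w i b - u i b\<bar> \<le> \<eta>) \<and> (\<forall>x\<in>V. \<bar>q x\<bar> \<le> 1 \<and> \<bar>p x - q x\<bar> \<le> \<eta>)"

lemma U_ev:
  assumes i: "i < n" and a: "a < N i" and \<kappa>: "\<kappa> > 0"
  shows "eventually (\<lambda>\<eta>. \<forall>w p q. near u \<eta> w p q \<longrightarrow> \<bar>U w i a p - U u i a q\<bar> < \<kappa>) (at_right 0)"
proof -
  define R where "R = (\<Sum>b\<in>profiles n N. \<bar>u i b\<bar>)"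
  have R0: "0 \<le> R" unfolding R_def by (intro sum_nonneg) auto
  have uR: "\<forall>b\<in>profiles n N. \<bar>u i b\<bar> \<le> R"
    unfolding R_def using profiles_fin by (auto intro: member_le_sum)
  define K where "K = real (card (PI i)) * (2^n + R * n * 2^n)"
  show ?thesis using ev_lin[OF \<kappa>, of K]
  proof eventually_elim
    case (elim \<eta>)
    show ?case
    proof (intro allI impI)
      fix w p q assume "near u \<eta> w p q"
      then have wu: "\<forall>b\<in>profiles n N. \<bar>w i b - u i b\<bar> \<le> \<eta>" and pq: "\<forall>x\<in>V. \<bar>q x\<bar> \<le> 1 \<and> \<bar>p x - q x\<bar> \<le> \<eta>"
        using i unfolding near_def by auto
      have e01: "0 \<le> \<eta>" "\<eta> \<le> 1" using elim by auto
      have "\<bar>U w i a p - U u i a q\<bar> \<le> real (card (PI i)) * ((2^n + R * n * 2^n) * \<eta>)"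
        by (rule U_lip[where i=i and a=a and \<eta>=\<eta> and R=R and w=w and u=u and q=q and p=p, OF i a e01 R0 wu uR pq])
      also have "\<dots> = K * \<eta>" unfolding K_def by simp
      finally show "\<bar>U w i a p - U u i a q\<bar> < \<kappa>" using elim by linarith
    qed
  qed
qed

lemma F_ev:
  assumes c: "c \<in> V" and \<kappa>: "\<kappa> > 0"
  shows "eventually (\<lambda>\<eta>. \<forall>w p q. near u \<eta> w p q \<longrightarrow> \<bar>F w p c - F u q c\<bar> < \<kappa>) (at_right 0)"
proof -
  obtain i k where ik: "c = (i,k)" "i < n" "k \<in> S i" using c by (auto simp: var_index_def)
  show ?thesis
  proof (cases "k = rf i")
    case True
    show ?thesis using ev_lin[OF \<kappa>, of "real (card (S i))"]
    proof eventually_elim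
      case (elim \<eta>)
      show ?case
      proof (intro allI impI)
        fix w p q assume "near u \<eta> w p q"
        then have pq: "\<forall>x\<in>V. \<bar>p x - q x\<bar> \<le> \<eta>" unfolding near_def by auto
        have "F w p c - F u q c = (\<Sum>l\<in>S i. p (i,l) - q (i,l))"
          using True ik by (simp add: char_fun_def sum_subtractf)
        then have "\<bar>F w p c - F u q c\<bar> \<le> (\<Sum>l\<in>S i. \<bar>p (i,l) - q (i,l)\<bar>)" by (simp add: sum_abs)
        also have "\<dots> \<le> real (card (S i)) * \<eta>"
          using pq ik by (intro sum_bounded_above) (auto simp: var_index_def)
        finally show "\<bar>F w p c - F u q c\<bar> < \<kappa>" using elim by linarith
      qed
    qed
  next
    case False
    have k: "k < N i" using ik S_sub by auto
    have r: "rf i < N i" using rf_in[OF ik(2)] S_sub by auto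
    have h: "\<kappa>/2 > 0" using \<kappa> by simp
    show ?thesis using U_ev[OF ik(2) r h, of u] U_ev[OF ik(2) k h, of u]
    proof eventually_elim
      case (elim \<eta>)
      show ?case
      proof (intro allI impI)
        fix w p q assume nr: "near u \<eta> w p q"
        have "F w p c - F u q c = (U w i (rf i) p - U u i (rf i) q) - (U w i k p - U u i k q)"
          using False ik by (simp add: char_fun_def)
        moreover have "\<bar>U w i (rf i) p - U u i (rf i) q\<bar> < \<kappa>/2" "\<bar>U w i k p - U u i k q\<bar> < \<kappa>/2"
          using elim nr by blast+
        ultimately show "\<bar>F w p c - F u q c\<bar> < \<kappa>" by linarith
      qed
    qed
  qed
qed

lemma eu_decomp:
  assumes i: "i < n" and \<tau>0: "\<forall>j<n. \<forall>l<N j. l \<notin> S j \<longrightarrow> \<tau> j l = 0"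
  shows "eu n N w (\<tau>(i:=s)) i = (\<Sum>k<N i. s k * U w i k (\<lambda>(j,l). \<tau> j l))"
proof -
  let ?J = "{..<n} - {i}"
  let ?B = "\<lambda>j. {..<N j}"
  have ins: "insert i ?J = {..<n}" using i by auto
  have iJ: "i \<notin> ?J" by simp
  have "profiles n N = PiE (insert i ?J) ?B" by (simp only: profiles_def ins)
  also have "\<dots> = (\<lambda>(y, g). g(i := y)) ` (?B i \<times> PiE ?J ?B)" by (rule PiE_insert_eq)
  finally have prof: "profiles n N = (\<lambda>(y, g). g(i := y)) ` (?B i \<times> PiE ?J ?B)" .
  have prodeq: "(\<Prod>j<n. (\<tau>(i:=s)) j ((g(i:=y)) j)) = s y * (\<Prod>j\<in>?J. \<tau> j (g j))" for g y
  proof -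
    have "(\<Prod>j<n. (\<tau>(i:=s)) j ((g(i:=y)) j)) = (\<Prod>j\<in>insert i ?J. (\<tau>(i:=s)) j ((g(i:=y)) j))"
      using ins by simp
    also have "\<dots> = s y * (\<Prod>j\<in>?J. (\<tau>(i:=s)) j ((g(i:=y)) j))"
      by (subst prod.insert) auto
    also have "(\<Prod>j\<in>?J. (\<tau>(i:=s)) j ((g(i:=y)) j)) = (\<Prod>j\<in>?J. \<tau> j (g j))"
      by (intro prod.cong) auto
    finally show ?thesis .
  qed
  have "eu n N w (\<tau>(i:=s)) i = (\<Sum>a\<in>profiles n N. w i a * (\<Prod>j<n. (\<tau>(i:=s)) j (a j)))"
    by (simp add: eu_def)
  also have "\<dots> = (\<Sum>(y,g)\<in>?B i \<times> PiE ?J ?B. w i (g(i:=y)) * (\<Prod>j<n. (\<tau>(i:=s)) j ((g(i:=y)) j)))"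
    unfolding prof by (subst sum.reindex[OF inj_combinator[OF iJ]]) (simp add: case_prod_unfold)
  also have "\<dots> = (\<Sum>y\<in>?B i. \<Sum>g\<in>PiE ?J ?B. w i (g(i:=y)) * (s y * (\<Prod>j\<in>?J. \<tau> j (g j))))"
    unfolding prodeq by (subst sum.cartesian_product) simp
  also have "\<dots> = (\<Sum>y\<in>?B i. s y * (\<Sum>g\<in>PiE ?J S. w i (g(i:=y)) * (\<Prod>j\<in>?J. \<tau> j (g j))))"
  proof (intro sum.cong refl)
    fix y
    have "(\<Sum>g\<in>PiE ?J S. w i (g(i:=y)) * (\<Prod>j\<in>?J. \<tau> j (g j))) = (\<Sum>g\<in>PiE ?J ?B. w i (g(i:=y)) * (\<Prod>j\<in>?J. \<tau> j (g j)))"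
    proof (rule sum.mono_neutral_left)
      show "finite (PiE ?J ?B)" by (simp add: finite_PiE)
      show "PiE ?J S \<subseteq> PiE ?J ?B" using S_sub by (intro PiE_mono) auto
      show "\<forall>g\<in>PiE ?J ?B - PiE ?J S. w i (g(i:=y)) * (\<Prod>j\<in>?J. \<tau> j (g j)) = 0"
      proof
        fix g assume g: "g \<in> PiE ?J ?B - PiE ?J S"
        then obtain j where j: "j \<in> ?J" "g j \<notin> S j" by (auto simp: PiE_iff)
        have "g j < N j" using g j by (auto simp: PiE_iff)
        then have "\<tau> j (g j) = 0" using \<tau>0 j by auto
        then have "(\<Prod>j\<in>?J. \<tau> j (g j)) = 0" using j by (intro prod_zero) auto
        then show "w i (g(i:=y)) * (\<Prod>j\<in>?J. \<tau> j (g j)) = 0" by simp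
      qed
    qed
    then show "(\<Sum>g\<in>PiE ?J ?B. w i (g(i:=y)) * (s y * (\<Prod>j\<in>?J. \<tau> j (g j)))) =
        s y * (\<Sum>g\<in>PiE ?J S. w i (g(i:=y)) * (\<Prod>j\<in>?J. \<tau> j (g j)))"
      by (simp add: sum_distrib_left mult_ac)
  qed
  also have "\<dots> = (\<Sum>k<N i. s k * U w i k (\<lambda>(j,l). \<tau> j l))"
    by (simp add: util_against_def)
  finally show ?thesis .
qed

lemma \<sigma>0: "\<forall>j<n. \<forall>l<N j. l \<notin> S j \<longrightarrow> \<sigma> j l = 0" using \<sigma>_off by blast

lemma nash_le:
  assumes nu: "nash n N u \<sigma>" and i: "i < n" and k: "k < N i"
  shows "U u i k p0 \<le> eu n N u \<sigma> i"
proof -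
  define s where "s = (\<lambda>j. if j = k then 1 else (0::real))"
  have ms: "mixed_strategy N i s" unfolding mixed_strategy_def s_def using k by auto
  have "eu n N u (\<sigma>(i:=s)) i = (\<Sum>k'<N i. s k' * U u i k' p0)"
    using eu_decomp[OF i \<sigma>0] by simp
  also have "\<dots> = (\<Sum>k'<N i. if k' = k then U u i k p0 else 0)"
    by (intro sum.cong) (auto simp: s_def)
  also have "\<dots> = U u i k p0" using k by simp
  finally show ?thesis using nu ms i unfolding nash_def by metis
qed

lemma nash_eq:
  assumes nu: "nash n N u \<sigma>" and i: "i < n" and k: "k \<in> S i"
  shows "U u i k p0 = eu n N u \<sigma> i"
proof -
  let ?m = "eu n N u \<sigma> i"
  have "eu n N u (\<sigma>(i:=\<sigma> i)) i = (\<Sum>k'<N i. \<sigma> i k' * U u i k' p0)"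
    by (rule eu_decomp[OF i \<sigma>0])
  then have m: "?m = (\<Sum>k'<N i. \<sigma> i k' * U u i k' p0)" by simp
  have "(\<Sum>k'<N i. \<sigma> i k' * (?m - U u i k' p0)) = ?m * (\<Sum>k'<N i. \<sigma> i k') - (\<Sum>k'<N i. \<sigma> i k' * U u i k' p0)"
    by (simp add: algebra_simps sum_subtractf sum_distrib_left)
  also have "\<dots> = 0" using m \<sigma>_sum[OF i] by simp
  finally have z: "(\<Sum>k'<N i. \<sigma> i k' * (?m - U u i k' p0)) = 0" .
  have nn: "\<forall>k'\<in>{..<N i}. 0 \<le> \<sigma> i k' * (?m - U u i k' p0)"
    using \<sigma>_nn[OF i] nash_le[OF nu i] by auto
  have kN: "k \<in> {..<N i}" using k S_sub by auto
  have "\<sigma> i k * (?m - U u i k p0) = 0"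
    using sum_nonneg_eq_0_iff[of "{..<N i}" "\<lambda>k'. \<sigma> i k' * (?m - U u i k' p0)"] z nn kN by simp
  moreover have "\<sigma> i k > 0" using k by (simp add: support_def)
  ultimately show ?thesis by simp
qed

end

lemma det_on_reindex:
  fixes V :: "'a set" and A :: "'a \<Rightarrow> 'a \<Rightarrow> real" and e :: "nat \<Rightarrow> 'a"
  assumes fin: "finite V" and e: "bij_betw e {0..<m} V"
  shows "det_on V A = Determinant.det (Matrix.mat m m (\<lambda>(a,b). A (e a) (e b)))"
proof -
  let ?M = "Matrix.mat m m (\<lambda>(a,b). A (e a) (e b))"
  let ?ie = "inv_into {0..<m} e"
  have inj: "inj_on e {0..<m}" using e by (simp add: bij_betw_def)
  have ie: "bij_betw ?ie V {0..<m}" using e by (rule bij_betw_inv_into)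
  have eie: "\<And>x. x \<in> V \<Longrightarrow> e (?ie x) = x" using e by (simp add: bij_betw_def f_inv_into_f)
  have iee: "\<And>a. a \<in> {0..<m} \<Longrightarrow> ?ie (e a) = a" using inj by (simp add: inv_into_f_f)
  have bij: "bij_betw (map_permutation {0..<m} e) {q. q permutes {0..<m}} {p. p permutes V}"
  proof (rule bij_betw_byWitness[where f' = "map_permutation V ?ie"])
    show "\<forall>q\<in>{q. q permutes {0..<m}}. map_permutation V ?ie (map_permutation {0..<m} e q) = q"
      using map_permutation_compose_inv[OF e _ iee] by auto
    show "\<forall>p\<in>{p. p permutes V}. map_permutation {0..<m} e (map_permutation V ?ie p) = p"
      using map_permutation_compose_inv[OF ie _ eie] by auto
    show "map_permutation {0..<m} e ` {q. q permutes {0..<m}} \<subseteq> {p. p permutes V}"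
      using map_permutation_permutes[OF e] by auto
    show "map_permutation V ?ie ` {p. p permutes V} \<subseteq> {q. q permutes {0..<m}}"
      using map_permutation_permutes[OF ie] by auto
  qed
  have "Determinant.det ?M = (\<Sum>q | q permutes {0..<m}. of_int (sign q) * (\<Prod>a = 0..<m. ?M $$ (a, q a)))"
    by (rule det_def'[OF mat_carrier])
  also have "\<dots> = (\<Sum>q | q permutes {0..<m}. of_int (sign (map_permutation {0..<m} e q)) *
       (\<Prod>x\<in>V. A x (map_permutation {0..<m} e q x)))"
  proof (intro sum.cong refl)
    fix q assume "q \<in> {q. q permutes {0..<m}}"
    then have q: "q permutes {0..<m}" by simp
    have s: "sign (map_permutation {0..<m} e q) = sign q"
      by (rule sign_map_permutation[OF inj q]) simp
    have "(\<Prod>x\<in>V. A x (map_permutation {0..<m} e q x)) = (\<Prod>a\<in>{0..<m}. A (e a) (map_permutation {0..<m} e q (e a)))"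
      by (rule prod.reindex_bij_betw[OF e, symmetric])
    also have "\<dots> = (\<Prod>a\<in>{0..<m}. ?M $$ (a, q a))"
    proof (intro prod.cong refl)
      fix a assume a: "a \<in> {0..<m}"
      have "q a \<in> {0..<m}" using q a by (simp add: permutes_in_image)
      then show "A (e a) (map_permutation {0..<m} e q (e a)) = ?M $$ (a, q a)"
        using a map_permutation_apply[OF inj a, of q] by simp
    qed
    finally show "of_int (sign q) * (\<Prod>a = 0..<m. ?M $$ (a, q a)) =
        of_int (sign (map_permutation {0..<m} e q)) * (\<Prod>x\<in>V. A x (map_permutation {0..<m} e q x))"
      using s by simp
  qed
  also have "\<dots> = (\<Sum>p | p permutes V. of_int (sign p) * (\<Prod>x\<in>V. A x (p x)))"
    by (rule sum.reindex_bij_betw[OF bij, where g = "\<lambda>p. of_int (sign p) * (\<Prod>x\<in>V. A x (p x))"])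
  finally show ?thesis unfolding det_on_def by simp
qed

lemma det_on_inverse:
  fixes V :: "'a set" and A :: "'a \<Rightarrow> 'a \<Rightarrow> real"
  assumes fin: "finite V" and nz: "det_on V A \<noteq> 0"
  shows "\<exists>B. (\<forall>c\<in>V. \<forall>d\<in>V. (\<Sum>v\<in>V. A c v * B v d) = (if c = d then 1 else 0)) \<and>
             (\<forall>c\<in>V. \<forall>d\<in>V. (\<Sum>v\<in>V. B c v * A v d) = (if c = d then 1 else 0))"
proof -
  define m where "m = card V"
  obtain e where e: "bij_betw e {0..<m} V" using ex_bij_betw_nat_finite[OF fin] unfolding m_def by blast
  let ?ie = "inv_into {0..<m} e"
  have inj: "inj_on e {0..<m}" using e by (simp add: bij_betw_def)
  have eie: "\<And>x. x \<in> V \<Longrightarrow> e (?ie x) = x" using e by (simp add: bij_betw_def f_inv_into_f)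
  have ieV: "\<And>x. x \<in> V \<Longrightarrow> ?ie x < m"
    using bij_betw_inv_into[OF e] by (auto simp: bij_betw_def)
  define M where "M = Matrix.mat m m (\<lambda>(a,b). A (e a) (e b))"
  have Mc: "M \<in> carrier_mat m m" unfolding M_def by simp
  have dM: "Determinant.det M = det_on V A" unfolding M_def by (rule det_on_reindex[OF fin e, symmetric])
  define D where "D = adj_mat M"
  note adj = adj_mat[OF Mc, folded D_def]
  define \<delta> where "\<delta> = det_on V A"
  define B where "B = (\<lambda>c d. D $$ (?ie c, ?ie d) / \<delta>)"
  have sumV: "(\<Sum>v\<in>V. f v) = (\<Sum>k\<in>{0..<m}. f (e k))" for f :: "'a \<Rightarrow> real"
    by (rule sum.reindex_bij_betw[OF e, symmetric])
  have prod1: "(\<Sum>k\<in>{0..<m}. M $$ (i,k) * D $$ (k,j)) = \<delta> * (if i = j then 1 else 0)" if "i < m" "j < m" for i j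
  proof -
    have "(M * D) $$ (i,j) = (Determinant.det M \<cdot>\<^sub>m 1\<^sub>m m) $$ (i,j)" using adj(2) by simp
    then show ?thesis using that Mc adj(1) dM
      by (simp add: scalar_prod_def \<delta>_def)
  qed
  have prod2: "(\<Sum>k\<in>{0..<m}. D $$ (i,k) * M $$ (k,j)) = \<delta> * (if i = j then 1 else 0)" if "i < m" "j < m" for i j
  proof -
    have "(D * M) $$ (i,j) = (Determinant.det M \<cdot>\<^sub>m 1\<^sub>m m) $$ (i,j)" using adj(3) by simp
    then show ?thesis using that Mc adj(1) dM
      by (simp add: scalar_prod_def \<delta>_def)
  qed
  have ieq: "?ie c = ?ie d \<longleftrightarrow> c = d" if "c \<in> V" "d \<in> V" for c d
    using eie that by metis
  have AB: "(\<Sum>v\<in>V. A c v * B v d) = (if c = d then 1 else 0)" if c: "c \<in> V" and d: "d \<in> V" for c d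
  proof -
    have "(\<Sum>v\<in>V. A c v * B v d) = (\<Sum>k\<in>{0..<m}. A c (e k) * B (e k) d)" by (rule sumV)
    also have "\<dots> = (\<Sum>k\<in>{0..<m}. M $$ (?ie c, k) * D $$ (k, ?ie d)) / \<delta>"
      unfolding sum_divide_distrib
    proof (intro sum.cong refl)
      fix k assume k: "k \<in> {0..<m}"
      have "?ie (e k) = k" using inj k by (simp add: inv_into_f_f)
      then show "A c (e k) * B (e k) d = M $$ (?ie c, k) * D $$ (k, ?ie d) / \<delta>"
        using k ieV[OF c] eie[OF c] unfolding M_def B_def by simp
    qed
    also have "\<dots> = (if c = d then 1 else 0)"
      using prod1[OF ieV[OF c] ieV[OF d]] ieq[OF c d] nz unfolding \<delta>_def by simp
    finally show ?thesis .
  qed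
  have BA: "(\<Sum>v\<in>V. B c v * A v d) = (if c = d then 1 else 0)" if c: "c \<in> V" and d: "d \<in> V" for c d
  proof -
    have "(\<Sum>v\<in>V. B c v * A v d) = (\<Sum>k\<in>{0..<m}. B c (e k) * A (e k) d)" by (rule sumV)
    also have "\<dots> = (\<Sum>k\<in>{0..<m}. D $$ (?ie c, k) * M $$ (k, ?ie d)) / \<delta>"
      unfolding sum_divide_distrib
    proof (intro sum.cong refl)
      fix k assume k: "k \<in> {0..<m}"
      have "?ie (e k) = k" using inj k by (simp add: inv_into_f_f)
      then show "B c (e k) * A (e k) d = D $$ (?ie c, k) * M $$ (k, ?ie d) / \<delta>"
        using k ieV[OF d] eie[OF d] unfolding M_def B_def by simp
    qed
    also have "\<dots> = (if c = d then 1 else 0)"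
      using prod2[OF ieV[OF c] ieV[OF d]] ieq[OF c d] nz unfolding \<delta>_def by simp
    finally show ?thesis .
  qed
  show ?thesis using AB BA by blast
qed


lemma ev_ex: "eventually P (at_right (0::real)) \<Longrightarrow> \<exists>\<eta>>0. P \<eta>"
  unfolding eventually_at_right_field by (metis field_lbound_gt_zero less_numeral_extra(1))

lemma gdist_ge:
  assumes "i < n" "a \<in> profiles n N"
  shows "\<bar>u i a - v i a\<bar> \<le> gdist n N u v"
proof -
  have "{\<bar>u i a - v i a\<bar> | i a. i < n \<and> a \<in> profiles n N} = (\<lambda>(i,a). \<bar>u i a - v i a\<bar>) ` ({..<n} \<times> profiles n N)"
    by auto
  moreover have "finite (profiles n N)" unfolding profiles_def by (simp add: finite_PiE)
  ultimately have fin: "finite {\<bar>u i a - v i a\<bar> | i a. i < n \<and> a \<in> profiles n N}" by simp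
  show ?thesis unfolding gdist_def using assms by (intro Max_ge[OF fin]) auto
qed

context GS begin

lemma local_punish:
  assumes nu: "nash n N u \<sigma>" and nd: "non_degenerate n N u \<sigma>" and \<epsilon>: "\<epsilon> > 0"
  shows "\<exists>r>0. \<forall>w. gdist n N u w < r \<longrightarrow> (\<exists>\<sigma>'. nash n N w \<sigma>' \<and> (\<forall>i<n. support N \<sigma>' i = S i) \<and>
           (\<forall>i<n. \<bar>eu n N w \<sigma>' i - eu n N u \<sigma> i\<bar> < \<epsilon>))"
proof -
  define A where "A = jacobian (char_fun n N u \<sigma>) p0"
  have Aeq: "A c v = F u (p0(v:=1)) c - F u (p0(v:=0)) c" for c v unfolding A_def by (rule jac)
  have detA: "det_on V A \<noteq> 0" using nd unfolding non_degenerate_def A_def by simp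
  obtain B where AB: "\<forall>c\<in>V. \<forall>d\<in>V. (\<Sum>v\<in>V. A c v * B v d) = (if c = d then 1 else 0)"
    and BA: "\<forall>c\<in>V. \<forall>d\<in>V. (\<Sum>v\<in>V. B c v * A v d) = (if c = d then 1 else 0)"
    using det_on_inverse[OF V_fin detA] by blast
  define \<beta> where "\<beta> = (\<Sum>x\<in>V. \<Sum>y\<in>V. \<bar>B x y\<bar>)"
  have \<beta>0: "0 \<le> \<beta>" unfolding \<beta>_def by (intro sum_nonneg) auto
  define cV where "cV = real (card V)"
  have cV0: "0 \<le> cV" unfolding cV_def by simp
  define \<kappa> where "\<kappa> = 1 / (2 * (\<beta> * cV + 1))"
  have bc0: "0 \<le> \<beta> * cV" using \<beta>0 cV0 by simp
  have \<kappa>0: "\<kappa> > 0" unfolding \<kappa>_def using bc0 by simp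
  have \<kappa>le: "\<beta> * cV * \<kappa> \<le> 1/2" unfolding \<kappa>_def using bc0 by (simp add: field_simps)
  define NS where "NS = {(i,k). i < n \<and> k < N i \<and> k \<notin> S i}"
  define gap where "gap = (\<lambda>(i,k). U u i (rf i) p0 - U u i k p0)"
  have NSfin: "finite NS"
  proof -
    have "NS \<subseteq> Sigma {..<n} (\<lambda>i. {..<N i})" unfolding NS_def by auto
    then show ?thesis by (rule finite_subset) auto
  qed
  have gap0: "x \<in> NS \<Longrightarrow> gap x > 0" for x
    using nd unfolding non_degenerate_def NS_def gap_def by auto
  have "eventually (\<lambda>\<gamma>. 0 < \<gamma> \<and> \<gamma> \<le> \<epsilon> \<and> (\<forall>x\<in>NS. 2 * \<gamma> < gap x)) (at_right 0)"
  proof -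
    have e1: "eventually (\<lambda>\<gamma>. \<forall>x\<in>NS. 2 * \<gamma> < gap x) (at_right 0)"
    proof (rule eventually_ball_finite[OF NSfin], rule ballI)
      fix x assume x: "x \<in> NS"
      show "eventually (\<lambda>\<gamma>. 2 * \<gamma> < gap x) (at_right 0)"
        using ev_lin[OF gap0[OF x], of 2] by (rule eventually_mono) auto
    qed
    have e2: "eventually (\<lambda>\<gamma>. 0 < \<gamma> \<and> \<gamma> \<le> 1 \<and> 1 * \<gamma> < \<epsilon>) (at_right 0)" by (rule ev_lin[OF \<epsilon>])
    show ?thesis using e1 e2 by eventually_elim auto
  qed
  then obtain \<gamma> where \<gamma>: "0 < \<gamma>" "\<gamma> \<le> \<epsilon>" "\<forall>x\<in>NS. 2 * \<gamma> < gap x" using ev_ex by blast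
  define IA where "IA = Sigma {..<n} (\<lambda>i. {..<N i})"
  have IAfin: "finite IA" unfolding IA_def by auto
  have "eventually (\<lambda>\<rho>. 0 < \<rho> \<and>
      (\<forall>c\<in>V. \<forall>w p q. near u \<rho> w p q \<longrightarrow> \<bar>F w p c - F u q c\<bar> < \<kappa>/2) \<and>
      (\<forall>x\<in>IA. \<forall>w p q. near u \<rho> w p q \<longrightarrow> \<bar>U w (fst x) (snd x) p - U u (fst x) (snd x) q\<bar> < \<gamma>) \<and>
      (\<forall>x\<in>V. \<rho> < p0 x)) (at_right 0)"
  proof -
    have h2: "\<kappa>/2 > 0" using \<kappa>0 by simp
    have e1: "eventually (\<lambda>\<rho>. \<forall>c\<in>V. \<forall>w p q. near u \<rho> w p q \<longrightarrow> \<bar>F w p c - F u q c\<bar> < \<kappa>/2) (at_right 0)"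
      using V_fin by (rule eventually_ball_finite) (use F_ev[OF _ h2] in auto)
    have e2: "eventually (\<lambda>\<rho>. \<forall>x\<in>IA. \<forall>w p q. near u \<rho> w p q \<longrightarrow> \<bar>U w (fst x) (snd x) p - U u (fst x) (snd x) q\<bar> < \<gamma>) (at_right 0)"
      using IAfin by (rule eventually_ball_finite) (use U_ev[OF _ _ \<gamma>(1)] in \<open>auto simp: IA_def\<close>)
    have e3: "eventually (\<lambda>\<rho>. \<forall>x\<in>V. \<rho> < p0 x) (at_right 0)"
    proof (rule eventually_ball_finite[OF V_fin], rule ballI)
      fix x assume x: "x \<in> V"
      show "eventually (\<lambda>\<rho>. \<rho> < p0 x) (at_right 0)"
        using ev_lin[OF V_pos[OF x], of 1] by (rule eventually_mono) auto
    qed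
    have e4: "eventually (\<lambda>\<rho>. 0 < \<rho>) (at_right (0::real))" by (simp add: eventually_at_right_less)
    show ?thesis using e1 e2 e3 e4 by eventually_elim auto
  qed
  then obtain \<rho> where \<rho>0: "0 < \<rho>"
    and \<rho>F: "\<forall>c\<in>V. \<forall>w p q. near u \<rho> w p q \<longrightarrow> \<bar>F w p c - F u q c\<bar> < \<kappa>/2"
    and \<rho>U: "\<forall>x\<in>IA. \<forall>w p q. near u \<rho> w p q \<longrightarrow> \<bar>U w (fst x) (snd x) p - U u (fst x) (snd x) q\<bar> < \<gamma>"
    and \<rho>p: "\<forall>x\<in>V. \<rho> < p0 x"
    using ev_ex by blast
  define \<theta> where "\<theta> = \<rho> / (2 * (\<beta> * cV + 1))"
  have \<theta>0: "\<theta> > 0" unfolding \<theta>_def using \<rho>0 bc0 by simp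
  have "eventually (\<lambda>r. 0 < r \<and> (\<forall>c\<in>V. \<forall>w p q. near u r w p q \<longrightarrow> \<bar>F w p c - F u q c\<bar> < \<theta>)) (at_right 0)"
  proof -
    have e1: "eventually (\<lambda>r. \<forall>c\<in>V. \<forall>w p q. near u r w p q \<longrightarrow> \<bar>F w p c - F u q c\<bar> < \<theta>) (at_right 0)"
      using V_fin by (rule eventually_ball_finite) (use F_ev[OF _ \<theta>0] in auto)
    have e4: "eventually (\<lambda>\<rho>. 0 < \<rho>) (at_right (0::real))" by (simp add: eventually_at_right_less)
    show ?thesis using e1 e4 by eventually_elim auto
  qed
  then obtain r0 where r00: "0 < r0" and r0F: "\<forall>c\<in>V. \<forall>w p q. near u r0 w p q \<longrightarrow> \<bar>F w p c - F u q c\<bar> < \<theta>"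
    using ev_ex by blast
  define r where "r = min r0 \<rho>"
  have r0: "0 < r" unfolding r_def using r00 \<rho>0 by simp
  show ?thesis
  proof (intro exI[of _ r] conjI allI impI r0)
    fix w assume wd: "gdist n N u w < r"
    have wclose: "\<forall>i<n. \<forall>b\<in>profiles n N. \<bar>w i b - u i b\<bar> \<le> r"
    proof (intro allI impI ballI)
      fix i b assume "i < n" "b \<in> profiles n N"
      then have "\<bar>u i b - w i b\<bar> \<le> gdist n N u w" by (rule gdist_ge)
      then show "\<bar>w i b - u i b\<bar> \<le> r" using wd by (simp add: abs_minus_commute)
    qed
    have wc0: "\<forall>i<n. \<forall>b\<in>profiles n N. \<bar>w i b - u i b\<bar> \<le> r0" using wclose unfolding r_def by force
    have wc\<rho>: "\<forall>i<n. \<forall>b\<in>profiles n N. \<bar>w i b - u i b\<bar> \<le> \<rho>" using wclose unfolding r_def by force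
    have "\<exists>p. (\<forall>x\<in>V. \<bar>p x - p0 x\<bar> \<le> \<rho>) \<and> (\<forall>c\<in>V. F w p c = F u p0 c)"
    proof (rule newton[where G = "\<lambda>p c. F w p c" and A = A and B = B and \<kappa> = \<kappa>])
      show "finite V" by (rule V_fin)
      show "\<And>p q c. c \<in> V \<Longrightarrow> \<forall>x\<in>V. p x = q x \<Longrightarrow> F w p c = F w q c" by (rule F_cong)
      show "\<And>p v t c. F w (p(v:=t)) c = F w (p(v:=0)) c + t * (F w (p(v:=1)) c - F w (p(v:=0)) c)"
        by (rule F_aff)
      show "\<And>c d. c \<in> V \<Longrightarrow> d \<in> V \<Longrightarrow> (\<Sum>v\<in>V. A c v * B v d) = (if c = d then 1 else 0)" using AB by blast
      show "\<And>c d. c \<in> V \<Longrightarrow> d \<in> V \<Longrightarrow> (\<Sum>v\<in>V. B c v * A v d) = (if c = d then 1 else 0)" using BA by blast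
      show "0 < \<rho>" by (rule \<rho>0)
      show "(\<Sum>x\<in>V. \<Sum>y\<in>V. \<bar>B x y\<bar>) * real (card V) * \<kappa> \<le> 1/2"
        using \<kappa>le unfolding \<beta>_def cV_def .
    next
      fix z c v assume z: "\<forall>x\<in>V. \<bar>z x - p0 x\<bar> \<le> \<rho>" and c: "c \<in> V" and v: "v \<in> V"
      have nr: "near u \<rho> w (z(v:=t)) (p0(v:=t))" if t: "t = 0 \<or> t = 1" for t
        unfolding near_def
      proof (intro conjI wc\<rho> ballI)
        fix x assume x: "x \<in> V"
        show "\<bar>(p0(v:=t)) x\<bar> \<le> 1" using t V_le1[OF x] by (cases "x = v") auto
        show "\<bar>(z(v:=t)) x - (p0(v:=t)) x\<bar> \<le> \<rho>" using z x \<rho>0 by (cases "x = v") auto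
      qed
      have a1: "\<bar>F w (z(v:=1)) c - F u (p0(v:=1)) c\<bar> < \<kappa>/2" using \<rho>F c nr[of 1] by blast
      have a0: "\<bar>F w (z(v:=0)) c - F u (p0(v:=0)) c\<bar> < \<kappa>/2" using \<rho>F c nr[of 0] by blast
      show "\<bar>F w (z(v:=1)) c - F w (z(v:=0)) c - A c v\<bar> \<le> \<kappa>"
        using a1 a0 unfolding Aeq by linarith
    next
      have nr: "near u r0 w p0 p0" unfolding near_def using wc0 V_le1 r00 by auto
      have each: "\<bar>F w p0 c - F u p0 c\<bar> \<le> \<theta>" if "c \<in> V" for c
        using r0F that nr by force
      have "(\<Sum>c\<in>V. \<bar>F w p0 c - F u p0 c\<bar>) \<le> cV * \<theta>"
        unfolding cV_def using each by (intro sum_bounded_above) auto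
      then have "\<beta> * (\<Sum>c\<in>V. \<bar>F w p0 c - F u p0 c\<bar>) \<le> \<beta> * (cV * \<theta>)"
        using \<beta>0 by (intro mult_left_mono) auto
      also have "\<dots> \<le> \<rho>/2" unfolding \<theta>_def using bc0 \<rho>0 by (simp add: field_simps)
      finally show "(\<Sum>x\<in>V. \<Sum>y\<in>V. \<bar>B x y\<bar>) * (\<Sum>c\<in>V. \<bar>F w p0 c - F u p0 c\<bar>) \<le> \<rho>/2"
        unfolding \<beta>_def .
    qed
    then obtain ps where ps\<rho>: "\<forall>x\<in>V. \<bar>ps x - p0 x\<bar> \<le> \<rho>" and psF: "\<forall>c\<in>V. F w ps c = F u p0 c" by blast
    define \<sigma>' where "\<sigma>' = (\<lambda>i k. if k \<in> S i then ps (i,k) else 0)"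
    define p' where "p' = (\<lambda>(j,l). \<sigma>' j l)"
    have p'ps: "\<forall>x\<in>V. p' x = ps x" unfolding p'_def \<sigma>'_def by (auto simp: var_index_def)
    have pspos: "0 < ps x" if "x \<in> V" for x using ps\<rho> \<rho>p that by force
    have supp: "support N \<sigma>' i = S i" if i: "i < n" for i
    proof
      show "support N \<sigma>' i \<subseteq> S i" unfolding support_def \<sigma>'_def by auto
      show "S i \<subseteq> support N \<sigma>' i"
      proof
        fix k assume k: "k \<in> S i"
        then have "(i,k) \<in> V" using i by (simp add: var_index_def)
        then show "k \<in> support N \<sigma>' i" using pspos k S_sub unfolding support_def \<sigma>'_def by auto
      qed
    qed
    have Uw: "U w i a p' = U w i a ps" if "i < n" for i a using U_cong[OF that p'ps] .
    have nearps: "near u \<rho> w ps p0" unfolding near_def using wc\<rho> V_le1 ps\<rho> by auto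
    have Uclose: "\<bar>U w i a ps - U u i a p0\<bar> < \<gamma>" if "i < n" "a < N i" for i a
      using \<rho>U nearps that unfolding IA_def by force
    have eqpay: "U w i k p' = U w i (rf i) p'" if i: "i < n" and k: "k \<in> S i" for i k
    proof (cases "k = rf i")
      case False
      have ik: "(i,k) \<in> V" using i k by (simp add: var_index_def)
      have "F w ps (i,k) = F u p0 (i,k)" using psF ik by blast
      then have "U w i (rf i) ps - U w i k ps = U u i (rf i) p0 - U u i k p0"
        using False by (simp add: char_fun_def)
      also have "\<dots> = 0" using nash_eq[OF nu i k] nash_eq[OF nu i rf_in[OF i]] by simp
      finally show ?thesis using Uw[OF i] by simp
    qed simp
    have strict: "U w i k p' < U w i (rf i) p'" if i: "i < n" and k: "k < N i" and kS: "k \<notin> S i" for i k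
    proof -
      have "2 * \<gamma> < gap (i,k)" using \<gamma>(3) i k kS unfolding NS_def by auto
      moreover have "\<bar>U w i k ps - U u i k p0\<bar> < \<gamma>" by (rule Uclose[OF i k])
      moreover have "\<bar>U w i (rf i) ps - U u i (rf i) p0\<bar> < \<gamma>"
        using Uclose[OF i] rf_in[OF i] S_sub by blast
      ultimately show ?thesis using Uw[OF i] unfolding gap_def by simp
    qed
    have le_rf: "U w i k p' \<le> U w i (rf i) p'" if i: "i < n" and k: "k < N i" for i k
      using eqpay[OF i] strict[OF i k] by (cases "k \<in> S i") auto
    have \<sigma>'0: "\<forall>j<n. \<forall>l<N j. l \<notin> S j \<longrightarrow> \<sigma>' j l = 0" unfolding \<sigma>'_def by auto
    have sum1: "(\<Sum>k<N i. \<sigma>' i k) = 1" if i: "i < n" for i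
    proof -
      have "(\<Sum>k<N i. \<sigma>' i k) = (\<Sum>k\<in>S i. \<sigma>' i k)"
        using S_sub \<sigma>'0 i by (intro sum.mono_neutral_right) auto
      also have "\<dots> = (\<Sum>k\<in>S i. ps (i,k))" unfolding \<sigma>'_def by simp
      also have "\<dots> = F w ps (i, rf i)" by (simp add: char_fun_def)
      also have "\<dots> = F u p0 (i, rf i)" using psF rf_in[OF i] i by (simp add: var_index_def)
      also have "\<dots> = 1" using \<sigma>_sumS[OF i] by (simp add: char_fun_def)
      finally show ?thesis .
    qed
    have mp': "mixed_profile n N \<sigma>'"
      unfolding mixed_profile_def mixed_strategy_def
    proof (intro allI impI conjI)
      fix i j assume "i < n" "j < N i"
      then show "0 \<le> \<sigma>' i j" using pspos unfolding \<sigma>'_def by (auto simp: var_index_def less_imp_le)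
    next
      fix i assume "i < n" then show "(\<Sum>j<N i. \<sigma>' i j) = 1" by (rule sum1)
    qed
    have eu_w: "eu n N w \<sigma>' i = U w i (rf i) p'" if i: "i < n" for i
    proof -
      have "eu n N w (\<sigma>'(i:=\<sigma>' i)) i = (\<Sum>k<N i. \<sigma>' i k * U w i k p')"
        unfolding p'_def by (rule eu_decomp[OF i \<sigma>'0])
      also have "\<dots> = (\<Sum>k<N i. \<sigma>' i k * U w i (rf i) p')"
      proof (intro sum.cong refl)
        fix k assume "k \<in> {..<N i}"
        show "\<sigma>' i k * U w i k p' = \<sigma>' i k * U w i (rf i) p'"
          using eqpay[OF i, of k] unfolding \<sigma>'_def by auto
      qed
      also have "\<dots> = U w i (rf i) p'" using sum1[OF i] by (simp add: sum_distrib_right[symmetric])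
      finally show ?thesis by simp
    qed
    have nash': "nash n N w \<sigma>'"
      unfolding nash_def
    proof (intro conjI mp' allI impI)
      fix i s assume i: "i < n" and ms: "mixed_strategy N i s"
      have "eu n N w (\<sigma>'(i:=s)) i = (\<Sum>k<N i. s k * U w i k p')"
        unfolding p'_def by (rule eu_decomp[OF i \<sigma>'0])
      also have "\<dots> \<le> (\<Sum>k<N i. s k * U w i (rf i) p')"
        using ms le_rf[OF i] by (intro sum_mono mult_left_mono) (auto simp: mixed_strategy_def)
      also have "\<dots> = U w i (rf i) p'" using ms by (simp add: sum_distrib_right[symmetric] mixed_strategy_def)
      finally show "eu n N w (\<sigma>'(i:=s)) i \<le> eu n N w \<sigma>' i" using eu_w[OF i] by simp
    qed
    have pay: "\<bar>eu n N w \<sigma>' i - eu n N u \<sigma> i\<bar> < \<epsilon>" if i: "i < n" for i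
    proof -
      have "eu n N w \<sigma>' i = U w i (rf i) ps" using eu_w[OF i] Uw[OF i] by simp
      moreover have "eu n N u \<sigma> i = U u i (rf i) p0" using nash_eq[OF nu i rf_in[OF i]] by simp
      moreover have "\<bar>U w i (rf i) ps - U u i (rf i) p0\<bar> < \<gamma>"
        using Uclose[OF i] rf_in[OF i] S_sub by blast
      ultimately show ?thesis using \<gamma>(2) by simp
    qed
    show "\<exists>\<sigma>'. nash n N w \<sigma>' \<and> (\<forall>i<n. support N \<sigma>' i = S i) \<and> (\<forall>i<n. \<bar>eu n N w \<sigma>' i - eu n N u \<sigma> i\<bar> < \<epsilon>)"
      using nash' supp pay by blast
  qed
qed

end

context GS begin

lemma eu_cont:
  assumes i: "i < n"
  shows "\<bar>eu n N w \<sigma> i - eu n N u \<sigma> i\<bar> \<le> real (card (profiles n N)) * gdist n N u w"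
proof -
  have pr: "\<bar>\<Prod>j<n. \<sigma> j (a j)\<bar> \<le> 1" if a: "a \<in> profiles n N" for a
  proof -
    have aj: "\<And>j. j < n \<Longrightarrow> a j < N j" using a unfolding profiles_def by (auto simp: PiE_iff)
    have "\<bar>\<Prod>j<n. \<sigma> j (a j)\<bar> = (\<Prod>j<n. \<bar>\<sigma> j (a j)\<bar>)" by (rule abs_prod)
    also have "\<dots> \<le> 1" using aj \<sigma>_nn \<sigma>_le1 by (intro prod_le_1) auto
    finally show ?thesis .
  qed
  have "eu n N w \<sigma> i - eu n N u \<sigma> i = (\<Sum>a\<in>profiles n N. (w i a - u i a) * (\<Prod>j<n. \<sigma> j (a j)))"
    unfolding eu_def sum_subtractf[symmetric] by (intro sum.cong) (auto simp: left_diff_distrib)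
  then have "\<bar>eu n N w \<sigma> i - eu n N u \<sigma> i\<bar> \<le> (\<Sum>a\<in>profiles n N. \<bar>(w i a - u i a) * (\<Prod>j<n. \<sigma> j (a j))\<bar>)"
    by (simp add: sum_abs)
  also have "\<dots> \<le> real (card (profiles n N)) * gdist n N u w"
  proof (intro sum_bounded_above)
    fix a assume a: "a \<in> profiles n N"
    have "\<bar>w i a - u i a\<bar> \<le> gdist n N u w" using gdist_ge[OF i a, of u w] by (simp add: abs_minus_commute)
    moreover have "0 \<le> \<bar>w i a - u i a\<bar>" by simp
    ultimately show "\<bar>(w i a - u i a) * (\<Prod>j<n. \<sigma> j (a j))\<bar> \<le> gdist n N u w"
      using pr[OF a] by (simp add: abs_mult) (metis mult_le_one mult.right_neutral mult_mono abs_ge_zero order_trans)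
  qed
  finally show ?thesis .
qed

end

theorem lemma2:
  fixes n :: nat and N :: "nat \<Rightarrow> nat" and \<sigma> :: mixed and C :: "game set"
  assumes "1 \<le> n"
    and "\<forall>i<n. 1 \<le> N i"
    and "mixed_profile n N \<sigma>"
    and "C \<subseteq> games n N"
    and "compactin (Metric_space.mtopology (games n N) (gdist n N)) C"
    and "\<forall>u\<in>C. nash n N u \<sigma> \<and> non_degenerate n N u \<sigma>"
  shows "\<forall>\<epsilon>>0. \<exists>\<delta>>0. \<forall>u\<in>C. strongly_punishable n N u \<sigma> \<epsilon> \<delta>"
proof (intro allI impI)
  fix \<epsilon> :: real assume \<epsilon>: "\<epsilon> > 0"
  interpret GS n N \<sigma> using assms(1-3) by unfold_locales
  interpret MS: Metric_space "games n N" "gdist n N" by (rule games_Metric_space[OF assms(1,2)])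
  define Kp where "Kp = real (card (profiles n N)) + 1"
  have Kp0: "Kp > 0" unfolding Kp_def by simp
  define Good where "Good = (\<lambda>u r. \<forall>w. gdist n N u w < r \<longrightarrow>
      (\<exists>\<sigma>'. nash n N w \<sigma>' \<and> (\<forall>i<n. support N \<sigma>' i = support N \<sigma> i) \<and>
           (\<forall>i<n. \<bar>eu n N w \<sigma>' i - eu n N u \<sigma> i\<bar> < \<epsilon>/2)) \<and>
      (\<forall>i<n. \<bar>eu n N w \<sigma> i - eu n N u \<sigma> i\<bar> < \<epsilon>/2))"
  have "\<forall>u\<in>C. \<exists>r>0. Good u r"
  proof
    fix u assume u: "u \<in> C"
    have h: "\<epsilon>/2 > 0" using \<epsilon> by simp
    obtain r1 where r1: "r1 > 0" and R1: "\<forall>w. gdist n N u w < r1 \<longrightarrow> (\<exists>\<sigma>'. nash n N w \<sigma>' \<and> (\<forall>i<n. support N \<sigma>' i = S i) \<and>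
           (\<forall>i<n. \<bar>eu n N w \<sigma>' i - eu n N u \<sigma> i\<bar> < \<epsilon>/2))"
      using local_punish[OF _ _ h, of u] assms(6) u by blast
    define r where "r = min r1 (\<epsilon> / (2 * Kp))"
    have r0: "r > 0" unfolding r_def using r1 \<epsilon> Kp0 by simp
    have "Good u r" unfolding Good_def
    proof (intro allI impI conjI)
      fix w assume wd: "gdist n N u w < r"
      then show "\<exists>\<sigma>'. nash n N w \<sigma>' \<and> (\<forall>i<n. support N \<sigma>' i = support N \<sigma> i) \<and>
           (\<forall>i<n. \<bar>eu n N w \<sigma>' i - eu n N u \<sigma> i\<bar> < \<epsilon>/2)"
        using R1 unfolding r_def by auto
      fix i assume i: "i < n"
      have g0: "0 \<le> gdist n N u w" by simp
      have "\<bar>eu n N w \<sigma> i - eu n N u \<sigma> i\<bar> \<le> real (card (profiles n N)) * gdist n N u w" by (rule eu_cont[OF i])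
      also have "\<dots> \<le> Kp * gdist n N u w" unfolding Kp_def using g0 by (intro mult_right_mono) auto
      also have "\<dots> < Kp * (\<epsilon> / (2 * Kp))"
        using wd Kp0 unfolding r_def by (intro mult_strict_left_mono) auto
      also have "\<dots> = \<epsilon>/2" using Kp0 by simp
      finally show "\<bar>eu n N w \<sigma> i - eu n N u \<sigma> i\<bar> < \<epsilon>/2" .
    qed
    then show "\<exists>r>0. Good u r" using r0 by blast
  qed
  then obtain R where R0: "\<And>u. u \<in> C \<Longrightarrow> R u > 0" and RG: "\<And>u. u \<in> C \<Longrightarrow> Good u (R u)"
    by metis
  show "\<exists>\<delta>>0. \<forall>u\<in>C. strongly_punishable n N u \<sigma> \<epsilon> \<delta>"
  proof (cases "C = {}")
    case True then show ?thesis by (intro exI[of _ 1]) auto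
  next
    case False
    let ?U = "(\<lambda>u. MS.mball u (R u / 2)) ` C"
    have cov: "C \<subseteq> \<Union>?U"
    proof
      fix u assume u: "u \<in> C"
      then have "u \<in> MS.mball u (R u / 2)" using assms(4) R0[OF u] by auto
      then show "u \<in> \<Union>?U" using u by blast
    qed
    have "\<exists>F. finite F \<and> F \<subseteq> ?U \<and> C \<subseteq> \<Union>F"
      using assms(5) cov unfolding compactin_def by (metis (no_types, lifting) MS.openin_mball imageE)
    then obtain F where F: "finite F" "F \<subseteq> ?U" "C \<subseteq> \<Union>F" by blast
    obtain C' where C': "C' \<subseteq> C" "finite C'" "F = (\<lambda>u. MS.mball u (R u / 2)) ` C'"
      using finite_subset_image[OF F(1,2)] by blast
    have C'ne: "C' \<noteq> {}" using False F(3) C'(3) by auto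
    define \<delta> where "\<delta> = Min ((\<lambda>u. R u / 2) ` C')"
    have \<delta>0: "\<delta> > 0" unfolding \<delta>_def using C' C'ne R0 by (subst Min_gr_iff) auto
    have \<delta>le: "\<delta> \<le> R u / 2" if "u \<in> C'" for u unfolding \<delta>_def using C'(2) that by (intro Min_le) auto
    show ?thesis
    proof (intro exI[of _ \<delta>] conjI \<delta>0 ballI)
      fix w assume w: "w \<in> C"
      show "strongly_punishable n N w \<sigma> \<epsilon> \<delta>"
        unfolding strongly_punishable_def
      proof (intro conjI ballI impI)
        show "nash n N w \<sigma>" using assms(6) w by blast
        fix u' assume u': "u' \<in> games n N" and wu': "gdist n N w u' < \<delta>"
        obtain u where u: "u \<in> C'" and wm: "w \<in> MS.mball u (R u / 2)" using F(3) C'(3) w by blast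
        have uC: "u \<in> C" using u C' by blast
        have uw: "gdist n N u w < R u / 2" using wm by simp
        have "gdist n N u u' \<le> gdist n N u w + gdist n N w u'"
          using assms(4) uC w u' by (intro MS.triangle) auto
        also have "\<dots> < R u" using uw wu' \<delta>le[OF u] by linarith
        finally have uu': "gdist n N u u' < R u" .
        obtain \<sigma>' where \<sigma>': "nash n N u' \<sigma>'" "\<forall>i<n. support N \<sigma>' i = support N \<sigma> i"
          "\<forall>i<n. \<bar>eu n N u' \<sigma>' i - eu n N u \<sigma> i\<bar> < \<epsilon>/2"
          using RG[OF uC] uu' unfolding Good_def by blast
        have ew: "\<forall>i<n. \<bar>eu n N w \<sigma> i - eu n N u \<sigma> i\<bar> < \<epsilon>/2"
          using RG[OF uC] uw R0[OF uC] unfolding Good_def by auto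
        have "\<forall>i<n. eu n N u' \<sigma>' i - eu n N w \<sigma> i < \<epsilon>"
        proof (intro allI impI)
          fix i assume i: "i < n"
          have a: "\<bar>eu n N u' \<sigma>' i - eu n N u \<sigma> i\<bar> < \<epsilon>/2" using \<sigma>'(3) i by blast
          have b: "\<bar>eu n N w \<sigma> i - eu n N u \<sigma> i\<bar> < \<epsilon>/2" using ew i by blast
          show "eu n N u' \<sigma>' i - eu n N w \<sigma> i < \<epsilon>" using a b by linarith
        qed
        then show "\<exists>\<sigma>'. nash n N u' \<sigma>' \<and> (\<forall>i<n. support N \<sigma>' i = support N \<sigma> i) \<and>
              (\<forall>i<n. eu n N u' \<sigma>' i - eu n N w \<sigma> i < \<epsilon>)"
          using \<sigma>'(1,2) by blast
      qed
    qed
  qed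
qed

end
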